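(* Let $h$ be an increasing, locally absolutely continuous homeomorphism of $\mathbb R$ onto itself such that $\|\log h'\|_{H^{1/2}}<\infty$. Then $h$ is strongly quasisymmetric.
   Context: $\|\varphi\|^2_{H^{1/2}}=\frac1{4\pi^2}\int_{\mathbb R}\int_{\mathbb R}\frac{|\varphi(s)-\varphi(t)|^2}{|s-t|^2}ds\,dt$. A sense-preserving homeomorphism $h$ of $\mathbb R$ onto itself is strongly quasisymmetric if it is locally absolutely continuous and $|h'|$ belongs to the Muckenhoupt class of weights $A_\infty$. *)

theory Defs
  imports "HOL-Analysis.Analysis"
begin

definition abs_cont_on_interval :: "real \<Rightarrow> real \<Rightarrow> (real \<Rightarrow> real) \<Rightarrow> bool" where
  "abs_cont_on_interval c d f \<longleftrightarrow>
     (\<forall>\<epsilon>>0. \<exists>\<delta>>0. \<forall>(n::nat) (a::nat \<Rightarrow> real) (b::nat \<Rightarrow> real).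
        (\<forall>i<n. c \<le> a i \<and> a i \<le> b i \<and> b i \<le> d) \<and>
        (\<forall>i<n. \<forall>j<n. i \<noteq> j \<longrightarrow> b i \<le> a j \<or> b j \<le> a i) \<and>
        (\<Sum>i<n. b i - a i) < \<delta>
        \<longrightarrow> (\<Sum>i<n. \<bar>f (b i) - f (a i)\<bar>) < \<epsilon>)"

definition locally_abs_cont :: "(real \<Rightarrow> real) \<Rightarrow> bool" where
  "locally_abs_cont f \<longleftrightarrow> (\<forall>c d. c \<le> d \<longrightarrow> abs_cont_on_interval c d f)"

text \<open>Muckenhoupt class A_infinity (Coifman--Fefferman form): w is a nonnegative
  locally integrable weight and there are C, alpha > 0 such that for every
  bounded interval I and every measurable E contained in I,
  w(E)/w(I) <= C (|E|/|I|)^alpha.\<close>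
definition A_infinity :: "(real \<Rightarrow> real) \<Rightarrow> bool" where
  "A_infinity w \<longleftrightarrow>
     (AE x in lebesgue. 0 \<le> w x) \<and>
     (\<forall>a b. set_integrable lebesgue {a..b} w) \<and>
     (\<exists>C>0. \<exists>\<alpha>>0. \<forall>a b. a < b \<longrightarrow>
        (\<forall>E \<in> sets lebesgue. E \<subseteq> {a..b} \<longrightarrow>
           (LINT x:E|lebesgue. w x) \<le>
             C * (measure lebesgue E / (b - a)) powr \<alpha> * (LINT x:{a..b}|lebesgue. w x)))"

definition strongly_quasisymmetric :: "(real \<Rightarrow> real) \<Rightarrow> bool" where
  "strongly_quasisymmetric h \<longleftrightarrow>
     strict_mono h \<and> (\<exists>g. homeomorphism UNIV UNIV h g) \<and>
     locally_abs_cont h \<and> A_infinity (\<lambda>x. \<bar>deriv h x\<bar>)"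

definition H12_sq :: "(real \<Rightarrow> real) \<Rightarrow> ennreal" where
  "H12_sq \<phi> = ennreal (1 / (4 * pi^2)) *
     (\<integral>\<^sup>+ s. (\<integral>\<^sup>+ t. ennreal ((\<phi> s - \<phi> t)^2 / (s - t)^2) \<partial>lebesgue) \<partial>lebesgue)"

end

theory Submission
  imports Defs
begin

lemma cosh_le_exp_half_sq_nonneg:
  fixes y :: real assumes "0 \<le> y"
  shows "cosh y \<le> exp (y^2/2)"
proof -
  have k: "sinh t \<le> t * cosh t" if "0 \<le> t" for t :: real
  proof -
    have "(\<lambda>t. t * cosh t - sinh t) 0 \<le> (\<lambda>t. t * cosh t - sinh t) t"
    proof (rule DERIV_nonneg_imp_nondecreasing[OF that])
      fix x :: real assume "0 \<le> x" "x \<le> t"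
      then show "\<exists>y. ((\<lambda>t. t * cosh t - sinh t) has_real_derivative y) (at x) \<and> 0 \<le> y"
      proof (intro exI[of _ "x * sinh x"] conjI)
        show "((\<lambda>t. t * cosh t - sinh t) has_real_derivative x * sinh x) (at x)"
          by (auto intro!: derivative_eq_intros simp: algebra_simps)
        show "0 \<le> x * sinh x" using \<open>0 \<le> x\<close> by simp
      qed
    qed
    then show ?thesis by simp
  qed
  have "(\<lambda>t. t^2/2 - ln (cosh t)) 0 \<le> (\<lambda>t. t^2/2 - ln (cosh t)) y"
  proof (rule DERIV_nonneg_imp_nondecreasing[OF assms])
    fix x :: real assume x: "0 \<le> x" "x \<le> y"
    have cp: "cosh x > 0" by (simp add: cosh_real_pos)
    have "sinh x / cosh x \<le> x" using k[of x] x cp by (simp add: divide_le_eq)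
    then show "\<exists>d. ((\<lambda>t. t^2/2 - ln (cosh t)) has_real_derivative d) (at x) \<and> 0 \<le> d"
      using cp by (intro exI[of _ "x - sinh x / cosh x"] conjI)
           (auto intro!: derivative_eq_intros simp: algebra_simps)
  qed
  then have "ln (cosh y) \<le> y^2/2" by simp
  then show ?thesis
    by (metis cosh_real_pos exp_le_cancel_iff exp_ln)
qed

lemma cosh_le_exp_half_sq:
  fixes y :: real shows "(exp y + exp (-y))/2 \<le> exp (y^2/2)"
proof -
  have "cosh \<bar>y\<bar> \<le> exp (\<bar>y\<bar>^2/2)" by (rule cosh_le_exp_half_sq_nonneg) simp
  moreover have "cosh \<bar>y\<bar> = (exp y + exp (-y))/2"
    by (cases "y \<ge> 0") (auto simp: cosh_def)
  ultimately show ?thesis by simp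
qed

definition avg :: "(real \<Rightarrow> real) \<Rightarrow> real \<Rightarrow> real \<Rightarrow> real" where
  "avg f c L = (LINT x:{c..<c+L}|lborel. f x) / L"

primrec dy :: "(real \<Rightarrow> real) \<Rightarrow> nat \<Rightarrow> real \<Rightarrow> real \<Rightarrow> real \<Rightarrow> real" where
  "dy f 0 c L x = avg f c L"
| "dy f (Suc n) c L x = (if x < c + L/2 then dy f n c (L/2) x else dy f n (c + L/2) (L/2) x)"

primrec tr :: "(real \<Rightarrow> real) \<Rightarrow> nat \<Rightarrow> real \<Rightarrow> real \<Rightarrow> real" where
  "tr f 0 c L = 0"
| "tr f (Suc n) c L = ((avg f c (L/2) - avg f (c + L/2) (L/2))/2)^2 + tr f n c (L/2) + tr f n (c + L/2) (L/2)"

lemma tr_nonneg: "0 \<le> tr f n c L"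
  by (induction n arbitrary: c L) auto

lemma dy_measurable[measurable]: "dy f n c L \<in> borel_measurable borel"
proof (induction n arbitrary: c L)
  case 0 then show ?case by simp
next
  case (Suc n)
  have "(\<lambda>x. if x < c + L/2 then dy f n c (L/2) x else dy f n (c + L/2) (L/2) x) \<in> borel_measurable borel"
    using Suc by measurable
  then show ?case by simp
qed

lemma split_nn:
  fixes F :: "real \<Rightarrow> ennreal"
  assumes [measurable]: "F \<in> borel_measurable borel" and L: "0 < L"
  shows "(\<integral>\<^sup>+x\<in>{c..<c+L}. F x \<partial>lborel) =
         (\<integral>\<^sup>+x\<in>{c..<c+L/2}. F x \<partial>lborel) + (\<integral>\<^sup>+x\<in>{c+L/2..<c+L}. F x \<partial>lborel)"
proof -
  have "(\<integral>\<^sup>+x\<in>{c..<c+L}. F x \<partial>lborel) =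
        (\<integral>\<^sup>+x. F x * indicator {c..<c+L/2} x + F x * indicator {c+L/2..<c+L} x \<partial>lborel)"
    using L by (intro nn_integral_cong) (auto split: split_indicator)
  also have "\<dots> = (\<integral>\<^sup>+x\<in>{c..<c+L/2}. F x \<partial>lborel) + (\<integral>\<^sup>+x\<in>{c+L/2..<c+L}. F x \<partial>lborel)"
    by (rule nn_integral_add) auto
  finally show ?thesis .
qed

lemma avg_split:
  assumes "set_integrable lborel {c..<c+L} f" and L: "0 < L"
  shows "avg f c L = (avg f c (L/2) + avg f (c + L/2) (L/2)) / 2"
proof -
  have U: "{c..<c+L} = {c..<c+L/2} \<union> {c+L/2..<c+L}" using L by auto
  have i1: "set_integrable lborel {c..<c+L/2} f"
    by (rule set_integrable_subset[OF assms(1)]) (use L in auto)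
  have i2: "set_integrable lborel {c+L/2..<c+L} f"
    by (rule set_integrable_subset[OF assms(1)]) (use L in auto)
  have "(LINT x:{c..<c+L}|lborel. f x) = (LINT x:{c..<c+L/2}|lborel. f x) + (LINT x:{c+L/2..<c+L}|lborel. f x)"
    unfolding U by (rule set_integral_Un[OF _ i1 i2]) auto
  moreover have e: "c + L/2 + L/2 = c + L" by simp
  ultimately show ?thesis using L unfolding avg_def e by (simp add: field_simps)
qed

lemma exp_bound_dy:
  assumes int: "\<And>a b. set_integrable lborel {a..<b} f" and L: "0 < L"
  shows "(\<integral>\<^sup>+x\<in>{c..<c+L}. ennreal (exp (t * (dy f n c L x - avg f c L))) \<partial>lborel)
           \<le> ennreal (L * exp (t^2 * tr f n c L / 2))"
  using L
proof (induction n arbitrary: c L)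
  case 0
  have "(\<integral>\<^sup>+x\<in>{c..<c+L}. ennreal (exp (t * (dy f 0 c L x - avg f c L))) \<partial>lborel)
        = (\<integral>\<^sup>+x. indicator {c..<c+L} x \<partial>lborel)"
    by (intro nn_integral_cong) (auto split: split_indicator)
  also have "\<dots> = ennreal L" using 0 by simp
  finally show ?case by simp
next
  case (Suc n)
  let ?m = "avg f c L" and ?ml = "avg f c (L/2)" and ?mr = "avg f (c + L/2) (L/2)"
  define a where "a = (?ml - ?mr)/2"
  have L2: "0 < L/2" using Suc by simp
  have mm: "?m = (?ml + ?mr)/2" by (rule avg_split[OF int Suc.prems])
  have ml: "?ml - ?m = a" and mr: "?mr - ?m = -a" using mm by (auto simp: a_def field_simps)
  have "(\<integral>\<^sup>+x\<in>{c..<c+L}. ennreal (exp (t * (dy f (Suc n) c L x - ?m))) \<partial>lborel)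
     = (\<integral>\<^sup>+x\<in>{c..<c+L/2}. ennreal (exp (t * (dy f (Suc n) c L x - ?m))) \<partial>lborel)
       + (\<integral>\<^sup>+x\<in>{c+L/2..<c+L}. ennreal (exp (t * (dy f (Suc n) c L x - ?m))) \<partial>lborel)"
    by (rule split_nn[OF _ Suc.prems]) measurable
  also have "(\<integral>\<^sup>+x\<in>{c..<c+L/2}. ennreal (exp (t * (dy f (Suc n) c L x - ?m))) \<partial>lborel)
      = (\<integral>\<^sup>+x. ennreal (exp (t * a)) * (ennreal (exp (t * (dy f n c (L/2) x - ?ml))) * indicator {c..<c+L/2} x) \<partial>lborel)"
  proof (intro nn_integral_cong)
    fix x
    have "t * (dy f n c (L/2) x - ?m) = t * a + t * (dy f n c (L/2) x - ?ml)"
    proof -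
      have m': "?m = ?ml - a" using ml by linarith
      show ?thesis by (simp only: m') (simp add: algebra_simps)
    qed
    then have "exp (t * (dy f n c (L/2) x - ?m)) = exp (t * a) * exp (t * (dy f n c (L/2) x - ?ml))"
      by (metis exp_add)
    then show "ennreal (exp (t * (dy f (Suc n) c L x - ?m))) * indicator {c..<c+L/2} x
        = ennreal (exp (t * a)) * (ennreal (exp (t * (dy f n c (L/2) x - ?ml))) * indicator {c..<c+L/2} x)"
      by (auto split: split_indicator simp: ennreal_mult)
  qed
  also have "\<dots> = ennreal (exp (t * a)) * (\<integral>\<^sup>+x\<in>{c..<c+L/2}. ennreal (exp (t * (dy f n c (L/2) x - ?ml))) \<partial>lborel)"
    by (rule nn_integral_cmult) measurable
  also have "(\<integral>\<^sup>+x\<in>{c+L/2..<c+L}. ennreal (exp (t * (dy f (Suc n) c L x - ?m))) \<partial>lborel)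
      = (\<integral>\<^sup>+x. ennreal (exp (- t * a)) * (ennreal (exp (t * (dy f n (c+L/2) (L/2) x - ?mr))) * indicator {c+L/2..<c+L/2+L/2} x) \<partial>lborel)"
  proof (intro nn_integral_cong)
    fix x
    have "t * (dy f n (c+L/2) (L/2) x - ?m) = - t * a + t * (dy f n (c+L/2) (L/2) x - ?mr)"
    proof -
      have m': "?m = ?mr + a" using mr by linarith
      show ?thesis by (simp only: m') (simp add: algebra_simps)
    qed
    then have "exp (t * (dy f n (c+L/2) (L/2) x - ?m)) = exp (- t * a) * exp (t * (dy f n (c+L/2) (L/2) x - ?mr))"
      by (metis exp_add)
    then show "ennreal (exp (t * (dy f (Suc n) c L x - ?m))) * indicator {c+L/2..<c+L} x
        = ennreal (exp (- t * a)) * (ennreal (exp (t * (dy f n (c+L/2) (L/2) x - ?mr))) * indicator {c+L/2..<c+L/2+L/2} x)"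
      by (auto split: split_indicator simp: ennreal_mult)
  qed
  also have "\<dots> = ennreal (exp (- t * a)) * (\<integral>\<^sup>+x\<in>{c+L/2..<c+L/2+L/2}. ennreal (exp (t * (dy f n (c+L/2) (L/2) x - ?mr))) \<partial>lborel)"
    by (rule nn_integral_cmult) measurable
  also have "ennreal (exp (t * a)) * (\<integral>\<^sup>+x\<in>{c..<c+L/2}. ennreal (exp (t * (dy f n c (L/2) x - ?ml))) \<partial>lborel)
     + ennreal (exp (- t * a)) * (\<integral>\<^sup>+x\<in>{c+L/2..<c+L/2+L/2}. ennreal (exp (t * (dy f n (c+L/2) (L/2) x - ?mr))) \<partial>lborel)
     \<le> ennreal (exp (t * a)) * ennreal (L/2 * exp (t^2 * tr f n c (L/2) / 2))
       + ennreal (exp (- t * a)) * ennreal (L/2 * exp (t^2 * tr f n (c+L/2) (L/2) / 2))"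
    by (intro add_mono mult_left_mono Suc.IH L2) auto
  also have "\<dots> = ennreal (exp (t * a) * (L/2 * exp (t^2 * tr f n c (L/2) / 2))
       + exp (- t * a) * (L/2 * exp (t^2 * tr f n (c+L/2) (L/2) / 2)))"
    using L2 by (simp add: ennreal_mult[symmetric] ennreal_plus[symmetric] del: ennreal_plus)
  also have "\<dots> \<le> ennreal (L * exp (t^2 * tr f (Suc n) c L / 2))"
  proof (rule ennreal_leI)
    let ?A = "tr f n c (L/2)" and ?B = "tr f n (c+L/2) (L/2)"
    have A: "exp (t^2 * ?A / 2) \<le> exp (t^2 * (?A + ?B) / 2)"
      using tr_nonneg[of f n "c+L/2" "L/2"] by (auto intro!: mult_left_mono simp: divide_right_mono)
    have B: "exp (t^2 * ?B / 2) \<le> exp (t^2 * (?A + ?B) / 2)"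
      using tr_nonneg[of f n c "L/2"] by (auto intro!: mult_left_mono simp: divide_right_mono)
    have "exp (t * a) * (L/2 * exp (t^2 * ?A / 2)) + exp (- t * a) * (L/2 * exp (t^2 * ?B / 2))
        \<le> exp (t * a) * (L/2 * exp (t^2 * (?A + ?B) / 2)) + exp (- t * a) * (L/2 * exp (t^2 * (?A + ?B) / 2))"
      using A B L2 by (intro add_mono mult_left_mono) auto
    also have "\<dots> = L * ((exp (t * a) + exp (- (t * a)))/2) * exp (t^2 * (?A + ?B) / 2)"
      by (simp add: algebra_simps)
    also have "\<dots> \<le> L * exp ((t*a)^2/2) * exp (t^2 * (?A + ?B) / 2)"
      using Suc.prems cosh_le_exp_half_sq[of "t*a"] by (intro mult_right_mono mult_left_mono) auto
    also have "\<dots> = L * exp (t^2 * tr f (Suc n) c L / 2)"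
    proof -
      have tr: "tr f (Suc n) c L = a^2 + ?A + ?B" by (simp add: a_def)
      have "(t*a)^2/2 + t^2 * (?A + ?B) / 2 = t^2 * (a^2 + ?A + ?B) / 2"
        by (simp add: power_mult_distrib distrib_left add_divide_distrib)
      then have "exp ((t*a)^2/2) * exp (t^2 * (?A + ?B) / 2) = exp (t^2 * tr f (Suc n) c L / 2)"
        unfolding tr by (simp add: exp_add[symmetric])
      then show ?thesis by (simp add: mult.assoc)
    qed
    finally show "exp (t * a) * (L/2 * exp (t^2 * ?A / 2)) + exp (- t * a) * (L/2 * exp (t^2 * ?B / 2))
        \<le> L * exp (t^2 * tr f (Suc n) c L / 2)" .
  qed
  finally show ?case by (simp add: add_mono)
qed

lemma emeasure_Ico_fin[simp]: "emeasure lborel {a..<b::real} < top"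
  by (cases "a \<le> b") auto

lemma emeasure_Ico_fin'[simp]: "emeasure lborel {a..<b::real} \<noteq> \<infinity>"
  by (cases "a \<le> b") auto

lemma abs_le_one_plus_sq: "\<bar>v::real\<bar> \<le> 1 + v^2"
proof -
  have "0 \<le> (\<bar>v\<bar> - 1/2)^2" by simp
  moreover have "(\<bar>v\<bar> - 1/2)^2 = v^2 - \<bar>v\<bar> + 1/4"
    by (simp add: power2_eq_square algebra_simps abs_mult_self_eq)
  ultimately show ?thesis by linarith
qed

lemma sq_fin_integrable:
  fixes u :: "real \<Rightarrow> real"
  assumes [measurable]: "u \<in> borel_measurable borel"
    and fin: "(\<integral>\<^sup>+x\<in>{c..<c+L}. ennreal ((u x)^2) \<partial>lborel) < \<infinity>"
  shows "set_integrable lborel {c..<c+L} (\<lambda>x. (u x)^2)" "set_integrable lborel {c..<c+L} u"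
proof -
  have "(\<integral>\<^sup>+x. ennreal (indicator {c..<c+L} x * (u x)^2) \<partial>lborel) = (\<integral>\<^sup>+x\<in>{c..<c+L}. ennreal ((u x)^2) \<partial>lborel)"
    by (intro nn_integral_cong) (auto split: split_indicator)
  then show i2: "set_integrable lborel {c..<c+L} (\<lambda>x. (u x)^2)"
    unfolding set_integrable_def using fin by (intro integrableI_nonneg) auto
  have i1: "integrable lborel (\<lambda>x. indicator {c..<c+L} x * (1 + (u x)^2) :: real)"
  proof -
    have "integrable lborel (\<lambda>x. indicator {c..<c+L} x + indicator {c..<c+L} x * (u x)^2 :: real)"
      using i2 unfolding set_integrable_def by (intro Bochner_Integration.integrable_add integrable_real_indicator) auto
    then show ?thesis by (simp add: algebra_simps)
  qed
  show "set_integrable lborel {c..<c+L} u"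
    unfolding set_integrable_def
  proof (rule Bochner_Integration.integrable_bound[OF i1])
    show "AE x in lborel. norm (indicator {c..<c+L} x *\<^sub>R u x) \<le> norm (indicator {c..<c+L} x * (1 + (u x)^2))"
    proof (rule AE_I2)
      fix x
      have "\<bar>u x\<bar> \<le> 1 + (u x)^2" by (rule abs_le_one_plus_sq)
      then show "norm (indicator {c..<c+L} x *\<^sub>R u x) \<le> norm (indicator {c..<c+L} x * (1 + (u x)^2))"
        by (auto split: split_indicator)
    qed
  qed measurable
qed

lemma cs_set:
  fixes u :: "real \<Rightarrow> real"
  assumes i1: "set_integrable lborel {c..<c+L} u" and i2: "set_integrable lborel {c..<c+L} (\<lambda>x. (u x)^2)"
    and L: "0 < L"
  shows "(LINT x:{c..<c+L}|lborel. u x)^2 \<le> L * (LINT x:{c..<c+L}|lborel. (u x)^2)"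
proof -
  let ?I = "indicator {c..<c+L} :: real \<Rightarrow> real"
  have j1: "integrable lborel (\<lambda>x. ?I x * u x)" using i1 by (simp add: set_integrable_def)
  have j2: "integrable lborel (\<lambda>x. ?I x * (u x)^2)" using i2 by (simp add: set_integrable_def)
  have j0: "integrable lborel ?I" by (intro integrable_real_indicator) auto
  define U where "U = integral\<^sup>L lborel (\<lambda>x. ?I x * u x)"
  define S where "S = integral\<^sup>L lborel (\<lambda>x. ?I x * (u x)^2)"
  define \<nu> where "\<nu> = U / L"
  have m: "integral\<^sup>L lborel ?I = L" using L by simp
  have "0 \<le> integral\<^sup>L lborel (\<lambda>x. ?I x * (u x - \<nu>)^2)"
    by (intro integral_nonneg_AE) auto
  also have "integral\<^sup>L lborel (\<lambda>x. ?I x * (u x - \<nu>)^2)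
      = integral\<^sup>L lborel (\<lambda>x. ?I x * (u x)^2 - (2*\<nu>) * (?I x * u x) + \<nu>^2 * ?I x)"
    by (intro Bochner_Integration.integral_cong) (auto simp: power2_eq_square algebra_simps)
  also have "\<dots> = S - 2*\<nu>*U + \<nu>^2 * L"
    using j0 j1 j2 m by (simp add: S_def U_def)
  finally have "0 \<le> S - 2*\<nu>*U + \<nu>^2 * L" .
  moreover have "2*\<nu>*U = 2 * U^2 / L" "\<nu>^2 * L = U^2/L" using L
    by (auto simp: \<nu>_def power2_eq_square field_simps)
  ultimately have "U^2 / L \<le> S" by simp
  then have "U^2 \<le> L * S" using L by (simp add: divide_le_eq mult.commute)
  then show ?thesis by (simp add: U_def S_def set_lebesgue_integral_def)
qed

lemma cs_nn:
  fixes g :: "real \<Rightarrow> real"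
  assumes [measurable]: "g \<in> borel_measurable borel" and L: "0 < L"
  shows "ennreal (L * (avg g c L - y)^2) \<le> (\<integral>\<^sup>+x\<in>{c..<c+L}. ennreal ((g x - y)^2) \<partial>lborel)"
proof (cases "(\<integral>\<^sup>+x\<in>{c..<c+L}. ennreal ((g x - y)^2) \<partial>lborel) < \<infinity>")
  case False then show ?thesis by (simp add: top_unique not_less)
next
  case True
  let ?u = "\<lambda>x. g x - y"
  have i2: "set_integrable lborel {c..<c+L} (\<lambda>x. (?u x)^2)" and i1: "set_integrable lborel {c..<c+L} ?u"
    using sq_fin_integrable[of ?u c L] True by auto
  have ig: "set_integrable lborel {c..<c+L} g"
  proof -
    have "set_integrable lborel {c..<c+L} (\<lambda>x. ?u x + y)"
      using i1 by (intro set_integral_add) (auto simp: set_integrable_def intro!: integrable_real_indicator)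
    then show ?thesis by simp
  qed
  have "(LINT x:{c..<c+L}|lborel. ?u x) = (LINT x:{c..<c+L}|lborel. g x) - (LINT x:{c..<c+L}|lborel. y)"
    using ig by (intro set_integral_diff) (auto simp: set_integrable_def intro!: integrable_real_indicator)
  also have "(LINT x:{c..<c+L}|lborel. y) = L * y"
    using L by (subst set_integral_const) auto
  finally have "avg g c L - y = (LINT x:{c..<c+L}|lborel. ?u x) / L"
    using L by (simp add: avg_def field_simps)
  then have "L * (avg g c L - y)^2 = L * ((LINT x:{c..<c+L}|lborel. ?u x) / L)^2"
    by simp
  also have "\<dots> = (LINT x:{c..<c+L}|lborel. ?u x)^2 / L"
    using L by (simp add: power2_eq_square)
  also have "\<dots> \<le> (LINT x:{c..<c+L}|lborel. (?u x)^2)"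
    using cs_set[OF i1 i2 L] L by (simp add: divide_le_eq mult.commute)
  finally have le: "L * (avg g c L - y)^2 \<le> (LINT x:{c..<c+L}|lborel. (?u x)^2)" .
  have "(\<integral>\<^sup>+x\<in>{c..<c+L}. ennreal ((g x - y)^2) \<partial>lborel)
        = (\<integral>\<^sup>+x. ennreal (indicator {c..<c+L} x * (?u x)^2) \<partial>lborel)"
    by (intro nn_integral_cong) (auto split: split_indicator)
  also have "\<dots> = ennreal (LINT x:{c..<c+L}|lborel. (?u x)^2)"
    using i2 unfolding set_integrable_def set_lebesgue_integral_def
    by (simp only: real_scaleR_def) (intro nn_integral_eq_integral, auto)
  finally show ?thesis using le by (simp add: ennreal_leI)
qed

definition Gk :: "(real \<Rightarrow> real) \<Rightarrow> real \<Rightarrow> real \<Rightarrow> ennreal" where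
  "Gk \<phi> s t = ennreal ((\<phi> s - \<phi> t)^2 / (s - t)^2)"

definition Wd :: "(real \<Rightarrow> real) \<Rightarrow> real \<Rightarrow> real \<Rightarrow> ennreal" where
  "Wd \<phi> c L = (\<integral>\<^sup>+s\<in>{c..<c+L}. (\<integral>\<^sup>+t\<in>{c..<c+L}. Gk \<phi> s t \<partial>lborel) \<partial>lborel)"

lemma Gk_measurable[measurable]:
  assumes [measurable]: "\<phi> \<in> borel_measurable borel"
  shows "(\<lambda>(s, t). Gk \<phi> s t) \<in> borel_measurable (lborel \<Otimes>\<^sub>M lborel)"
  unfolding Gk_def by measurable

lemma cross_bound:
  fixes \<phi> :: "real \<Rightarrow> real"
  assumes [measurable]: "\<phi> \<in> borel_measurable borel" and L: "0 < L"
  shows "ennreal (((avg \<phi> c (L/2) - avg \<phi> (c+L/2) (L/2))/2)^2)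
    \<le> (\<integral>\<^sup>+s\<in>{c..<c+L/2}. (\<integral>\<^sup>+t\<in>{c+L/2..<c+L}. Gk \<phi> s t \<partial>lborel) \<partial>lborel)"
proof -
  let ?ml = "avg \<phi> c (L/2)" and ?mr = "avg \<phi> (c+L/2) (L/2)"
  have e: "c + L/2 + L/2 = c + L" by simp
  have L2: "0 < L/2" using L by simp
  have inner: "ennreal ((\<phi> s - ?mr)^2 / (2*L)) \<le> (\<integral>\<^sup>+t\<in>{c+L/2..<c+L}. Gk \<phi> s t \<partial>lborel)"
    if s: "s \<in> {c..<c+L/2}" for s
  proof -
    have r: "1/L^2 * (L/2 * (?mr - \<phi> s)^2) = (\<phi> s - ?mr)^2/(2*L)"
      using L by (simp add: power2_eq_square field_simps)
    have "ennreal (1/L^2) * ennreal (L/2 * (?mr - \<phi> s)^2) = ennreal (1/L^2 * (L/2 * (?mr - \<phi> s)^2))"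
      by (rule ennreal_mult[symmetric]) (use L in auto)
    then have "ennreal ((\<phi> s - ?mr)^2 / (2*L)) = ennreal (1/L^2) * ennreal (L/2 * (?mr - \<phi> s)^2)"
      using r by simp
    also have "\<dots> \<le> ennreal (1/L^2) * (\<integral>\<^sup>+t\<in>{c+L/2..<c+L/2+L/2}. ennreal ((\<phi> t - \<phi> s)^2) \<partial>lborel)"
      by (intro mult_left_mono cs_nn L2) auto
    also have "\<dots> = (\<integral>\<^sup>+t. ennreal (1/L^2) * (ennreal ((\<phi> t - \<phi> s)^2) * indicator {c+L/2..<c+L/2+L/2} t) \<partial>lborel)"
      by (rule nn_integral_cmult[symmetric]) measurable
    also have "\<dots> \<le> (\<integral>\<^sup>+t\<in>{c+L/2..<c+L}. Gk \<phi> s t \<partial>lborel)"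
    proof (intro nn_integral_mono)
      fix t
      show "ennreal (1/L^2) * (ennreal ((\<phi> t - \<phi> s)^2) * indicator {c+L/2..<c+L/2+L/2} t)
           \<le> Gk \<phi> s t * indicator {c+L/2..<c+L} t"
      proof (cases "t \<in> {c+L/2..<c+L}")
        case True
        then have st: "s < t" "t - s \<le> L" using s L by auto
        then have d: "0 < (s - t)^2" "(s - t)^2 \<le> L^2"
          by (auto simp: power2_commute[of s t] intro!: power_mono)
        have "(\<phi> t - \<phi> s)^2 / L^2 \<le> (\<phi> s - \<phi> t)^2 / (s - t)^2"
          using d L by (auto simp: power2_commute intro!: divide_left_mono)
        then show ?thesis using True
          by (auto simp: Gk_def ennreal_mult[symmetric] intro!: ennreal_leI)
      qed auto
    qed
    finally show ?thesis .
  qed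
  have r: "1/(2*L) * (L/2 * (?ml - ?mr)^2) = ((?ml - ?mr)/2)^2"
    using L by (simp add: power2_eq_square field_simps)
  have "ennreal (1/(2*L)) * ennreal (L/2 * (?ml - ?mr)^2) = ennreal (1/(2*L) * (L/2 * (?ml - ?mr)^2))"
    by (rule ennreal_mult[symmetric]) (use L in auto)
  then have "ennreal (((?ml - ?mr)/2)^2) = ennreal (1/(2*L)) * ennreal (L/2 * (?ml - ?mr)^2)"
    using r by simp
  also have "\<dots> \<le> ennreal (1/(2*L)) * (\<integral>\<^sup>+s\<in>{c..<c+L/2}. ennreal ((\<phi> s - ?mr)^2) \<partial>lborel)"
    by (intro mult_left_mono cs_nn L2) auto
  also have "\<dots> = (\<integral>\<^sup>+s. ennreal (1/(2*L)) * (ennreal ((\<phi> s - ?mr)^2) * indicator {c..<c+L/2} s) \<partial>lborel)"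
    by (rule nn_integral_cmult[symmetric]) measurable
  also have "\<dots> \<le> (\<integral>\<^sup>+s\<in>{c..<c+L/2}. (\<integral>\<^sup>+t\<in>{c+L/2..<c+L}. Gk \<phi> s t \<partial>lborel) \<partial>lborel)"
  proof (intro nn_integral_mono)
    fix s
    show "ennreal (1/(2*L)) * (ennreal ((\<phi> s - ?mr)^2) * indicator {c..<c+L/2} s)
       \<le> (\<integral>\<^sup>+t\<in>{c+L/2..<c+L}. Gk \<phi> s t \<partial>lborel) * indicator {c..<c+L/2} s"
      using inner[of s] L by (auto split: split_indicator simp: ennreal_mult[symmetric])
  qed
  finally show ?thesis .
qed

lemma Gk_meas_t[measurable]:
  assumes [measurable]: "\<phi> \<in> borel_measurable borel"
  shows "Gk \<phi> s \<in> borel_measurable borel"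
  unfolding Gk_def by measurable

lemma inner_meas[measurable]:
  assumes [measurable]: "\<phi> \<in> borel_measurable borel" and [measurable]: "A \<in> sets borel"
  shows "(\<lambda>s. \<integral>\<^sup>+t\<in>A. Gk \<phi> s t \<partial>lborel) \<in> borel_measurable borel"
  unfolding Gk_def by measurable

lemma Wd_split:
  fixes \<phi> :: "real \<Rightarrow> real"
  assumes [measurable]: "\<phi> \<in> borel_measurable borel" and L: "0 < L"
  shows "Wd \<phi> c (L/2) + Wd \<phi> (c+L/2) (L/2)
     + (\<integral>\<^sup>+s\<in>{c..<c+L/2}. (\<integral>\<^sup>+t\<in>{c+L/2..<c+L}. Gk \<phi> s t \<partial>lborel) \<partial>lborel) \<le> Wd \<phi> c L"
proof -
  have e: "c + L/2 + L/2 = c + L" by simp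
  let ?F = "\<lambda>A s. \<integral>\<^sup>+t\<in>A. Gk \<phi> s t \<partial>lborel"
  have "Wd \<phi> c (L/2) + Wd \<phi> (c+L/2) (L/2)
     + (\<integral>\<^sup>+s\<in>{c..<c+L/2}. ?F {c+L/2..<c+L} s \<partial>lborel)
     = (\<integral>\<^sup>+s. ?F {c..<c+L/2} s * indicator {c..<c+L/2} s + ?F {c+L/2..<c+L} s * indicator {c+L/2..<c+L} s \<partial>lborel)
     + (\<integral>\<^sup>+s\<in>{c..<c+L/2}. ?F {c+L/2..<c+L} s \<partial>lborel)"
    unfolding Wd_def e by (subst nn_integral_add) auto
  also have "\<dots> = (\<integral>\<^sup>+s. ?F {c..<c+L/2} s * indicator {c..<c+L/2} s + ?F {c+L/2..<c+L} s * indicator {c+L/2..<c+L} s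
        + ?F {c+L/2..<c+L} s * indicator {c..<c+L/2} s \<partial>lborel)"
    by (subst nn_integral_add) auto
  also have "\<dots> \<le> (\<integral>\<^sup>+s. ?F {c..<c+L} s * indicator {c..<c+L} s \<partial>lborel)"
  proof (intro nn_integral_mono)
    fix s
    show "?F {c..<c+L/2} s * indicator {c..<c+L/2} s + ?F {c+L/2..<c+L} s * indicator {c+L/2..<c+L} s
        + ?F {c+L/2..<c+L} s * indicator {c..<c+L/2} s \<le> ?F {c..<c+L} s * indicator {c..<c+L} s"
    proof (cases "s \<in> {c..<c+L/2}")
      case True
      then have "s \<notin> {c+L/2..<c+L}" by auto
      then show ?thesis using True L split_nn[of "Gk \<phi> s" L c] by auto
    next
      case False
      show ?thesis
      proof (cases "s \<in> {c+L/2..<c+L}")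
        case True
        have "?F {c+L/2..<c+L} s \<le> ?F {c..<c+L} s"
          using L by (intro nn_integral_mono) (auto split: split_indicator)
        then show ?thesis using True False L by auto
      qed (use False L in auto)
    qed
  qed
  also have "\<dots> = Wd \<phi> c L" unfolding Wd_def ..
  finally show ?thesis .
qed

lemma tr_le_Wd:
  fixes \<phi> :: "real \<Rightarrow> real"
  assumes [measurable]: "\<phi> \<in> borel_measurable borel" and L: "0 < L"
  shows "ennreal (tr \<phi> n c L) \<le> Wd \<phi> c L"
  using L
proof (induction n arbitrary: c L)
  case 0 then show ?case by simp
next
  case (Suc n)
  have L2: "0 < L/2" using Suc by simp
  have "ennreal (tr \<phi> (Suc n) c L) = ennreal (((avg \<phi> c (L/2) - avg \<phi> (c + L/2) (L/2))/2)^2)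
      + ennreal (tr \<phi> n c (L/2)) + ennreal (tr \<phi> n (c + L/2) (L/2))"
    using tr_nonneg by (simp add: ennreal_plus[symmetric] del: ennreal_plus)
  also have "\<dots> \<le> (\<integral>\<^sup>+s\<in>{c..<c+L/2}. (\<integral>\<^sup>+t\<in>{c+L/2..<c+L}. Gk \<phi> s t \<partial>lborel) \<partial>lborel)
      + Wd \<phi> c (L/2) + Wd \<phi> (c+L/2) (L/2)"
    by (intro add_mono cross_bound Suc.IH L2 Suc.prems) auto
  also have "\<dots> \<le> Wd \<phi> c L"
    using Wd_split[of \<phi> L c] Suc.prems by (simp add: ac_simps)
  finally show ?case .
qed

lemma avg_diff:
  assumes "set_integrable lborel {c..<c+L} f" "set_integrable lborel {c..<c+L} g"
  shows "avg (\<lambda>x. f x - g x) c L = avg f c L - avg g c L"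
  using assms by (simp add: avg_def set_integral_diff diff_divide_distrib)

lemma dy_diff:
  assumes "\<And>a b. set_integrable lborel {a..<b} f" "\<And>a b. set_integrable lborel {a..<b} g"
  shows "dy (\<lambda>x. f x - g x) n c L x = dy f n c L x - dy g n c L x"
  by (induction n arbitrary: c L) (auto simp: avg_diff assms)

lemma dy_contract:
  assumes int: "\<And>a b. set_integrable lborel {a..<b} f" and [measurable]: "f \<in> borel_measurable borel"
    and L: "0 < L"
  shows "(\<integral>\<^sup>+x\<in>{c..<c+L}. ennreal \<bar>dy f n c L x\<bar> \<partial>lborel) \<le> (\<integral>\<^sup>+x\<in>{c..<c+L}. ennreal \<bar>f x\<bar> \<partial>lborel)"
  using L
proof (induction n arbitrary: c L)
  case 0
  have "(\<integral>\<^sup>+x\<in>{c..<c+L}. ennreal \<bar>dy f 0 c L x\<bar> \<partial>lborel) = ennreal \<bar>avg f c L\<bar> * (\<integral>\<^sup>+x. indicator {c..<c+L} x \<partial>lborel)"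
    by (subst nn_integral_cmult[symmetric]) auto
  also have "\<dots> = ennreal (\<bar>LINT x:{c..<c+L}|lborel. f x\<bar>)"
    using 0 by (simp add: avg_def ennreal_mult[symmetric] abs_div)
  also have "\<dots> \<le> (\<integral>\<^sup>+x. norm (indicator {c..<c+L} x *\<^sub>R f x) \<partial>lborel)"
    using int[of c "c+L"] integral_norm_bound_ennreal[of lborel "\<lambda>x. indicator {c..<c+L} x *\<^sub>R f x"]
    by (simp add: set_integrable_def set_lebesgue_integral_def)
  also have "\<dots> = (\<integral>\<^sup>+x\<in>{c..<c+L}. ennreal \<bar>f x\<bar> \<partial>lborel)"
    by (intro nn_integral_cong) (auto split: split_indicator)
  finally show ?case .
next
  case (Suc n)
  have e: "c + L/2 + L/2 = c + L" by simp
  have L2: "0 < L/2" using Suc by simp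
  have "(\<integral>\<^sup>+x\<in>{c..<c+L}. ennreal \<bar>dy f (Suc n) c L x\<bar> \<partial>lborel)
     = (\<integral>\<^sup>+x\<in>{c..<c+L/2}. ennreal \<bar>dy f (Suc n) c L x\<bar> \<partial>lborel)
       + (\<integral>\<^sup>+x\<in>{c+L/2..<c+L}. ennreal \<bar>dy f (Suc n) c L x\<bar> \<partial>lborel)"
    by (rule split_nn[OF _ Suc.prems]) measurable
  also have "(\<integral>\<^sup>+x\<in>{c..<c+L/2}. ennreal \<bar>dy f (Suc n) c L x\<bar> \<partial>lborel)
     = (\<integral>\<^sup>+x\<in>{c..<c+L/2}. ennreal \<bar>dy f n c (L/2) x\<bar> \<partial>lborel)"
    by (intro nn_integral_cong) (auto split: split_indicator)
  also have "(\<integral>\<^sup>+x\<in>{c+L/2..<c+L}. ennreal \<bar>dy f (Suc n) c L x\<bar> \<partial>lborel)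
     = (\<integral>\<^sup>+x\<in>{c+L/2..<c+L/2+L/2}. ennreal \<bar>dy f n (c+L/2) (L/2) x\<bar> \<partial>lborel)"
    by (intro nn_integral_cong) (auto split: split_indicator)
  also have "(\<integral>\<^sup>+x\<in>{c..<c+L/2}. ennreal \<bar>dy f n c (L/2) x\<bar> \<partial>lborel)
      + (\<integral>\<^sup>+x\<in>{c+L/2..<c+L/2+L/2}. ennreal \<bar>dy f n (c+L/2) (L/2) x\<bar> \<partial>lborel)
      \<le> (\<integral>\<^sup>+x\<in>{c..<c+L/2}. ennreal \<bar>f x\<bar> \<partial>lborel) + (\<integral>\<^sup>+x\<in>{c+L/2..<c+L/2+L/2}. ennreal \<bar>f x\<bar> \<partial>lborel)"
    by (intro add_mono Suc.IH L2)
  also have "\<dots> = (\<integral>\<^sup>+x\<in>{c..<c+L}. ennreal \<bar>f x\<bar> \<partial>lborel)"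
    unfolding e by (rule split_nn[symmetric, OF _ Suc.prems]) measurable
  finally show ?case .
qed

lemma dy_loc:
  assumes "x \<in> {c..<c+L}" "0 < L"
  shows "\<exists>c'. c \<le> c' \<and> c' \<le> x \<and> x < c' + L/2^n \<and> c' + L/2^n \<le> c + L \<and> dy f n c L x = avg f c' (L/2^n)"
  using assms
proof (induction n arbitrary: c L)
  case 0 then show ?case by auto
next
  case (Suc n)
  show ?case
  proof (cases "x < c + L/2")
    case True
    then obtain c' where "c \<le> c' \<and> c' \<le> x \<and> x < c' + (L/2)/2^n \<and> c' + (L/2)/2^n \<le> c + L/2 \<and> dy f n c (L/2) x = avg f c' ((L/2)/2^n)"
      using Suc.IH[of c "L/2"] Suc.prems by auto
    moreover have "(L/2)/2^n = L/2^Suc n" by simp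
    ultimately show ?thesis using True Suc.prems by (intro exI[of _ c']) auto
  next
    case False
    then obtain c' where "c + L/2 \<le> c' \<and> c' \<le> x \<and> x < c' + (L/2)/2^n \<and> c' + (L/2)/2^n \<le> c + L/2 + L/2 \<and> dy f n (c + L/2) (L/2) x = avg f c' ((L/2)/2^n)"
      using Suc.IH[of "c + L/2" "L/2"] Suc.prems by auto
    moreover have "(L/2)/2^n = L/2^Suc n" by simp
    ultimately show ?thesis using False Suc.prems by (intro exI[of _ c']) auto
  qed
qed

lemma set_integrable_const_Ico[simp]: "set_integrable lborel {a..<b::real} (\<lambda>_. k::real)"
  unfolding set_integrable_def by (simp only: real_scaleR_def) (intro integrable_mult_left integrable_real_indicator, auto)

lemma set_integral_const_Ico: "0 < L \<Longrightarrow> (LINT x:{c..<c+L}|lborel. (k::real)) = L * k"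
  by (subst set_integral_const) auto

lemma avg_near:
  assumes l: "0 < l" and i: "set_integrable lborel {c..<c+l} g"
    and b: "\<And>y. y \<in> {c..<c+l} \<Longrightarrow> \<bar>g y - v\<bar> \<le> e"
  shows "\<bar>avg g c l - v\<bar> \<le> e"
proof -
  have bb: "g y \<le> v + e \<and> v - e \<le> g y" if "y \<in> {c..<c+l}" for y
    using b[OF that] by (auto simp: abs_le_iff)
  have "(LINT y:{c..<c+l}|lborel. g y) \<le> (LINT y:{c..<c+l}|lborel. v + e)"
    using bb by (intro set_integral_mono i) auto
  moreover have "(LINT y:{c..<c+l}|lborel. v - e) \<le> (LINT y:{c..<c+l}|lborel. g y)"
    using bb by (intro set_integral_mono i) auto
  ultimately have "(LINT y:{c..<c+l}|lborel. g y) \<le> l * (v + e)" "l * (v - e) \<le> (LINT y:{c..<c+l}|lborel. g y)"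
    using l by (auto simp: set_integral_const_Ico algebra_simps)
  then show ?thesis using l unfolding avg_def
    by (auto simp: abs_le_iff field_simps)
qed

lemma dy_cont_conv:
  assumes g: "continuous_on UNIV g" and L: "0 < L" and e: "0 < e"
  shows "\<exists>N. \<forall>n\<ge>N. \<forall>x\<in>{c..<c+L}. \<bar>dy g n c L x - g x\<bar> \<le> e"
proof -
  have "uniformly_continuous_on {c..c+L} g"
    by (intro compact_uniformly_continuous continuous_on_subset[OF g]) auto
  then obtain d where d: "0 < d" and dd: "\<And>x y. x \<in> {c..c+L} \<Longrightarrow> y \<in> {c..c+L} \<Longrightarrow> dist y x < d \<Longrightarrow> dist (g y) (g x) < e"
    using e unfolding uniformly_continuous_on_def by metis
  obtain N where N: "L / 2^N < d"
  proof -
    obtain N where "L / d < 2^N" using real_arch_pow[of 2 "L/d"] by auto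
    then have "L / 2^N < d" using d by (simp add: field_simps)
    then show ?thesis using that by blast
  qed
  have "\<forall>n\<ge>N. \<forall>x\<in>{c..<c+L}. \<bar>dy g n c L x - g x\<bar> \<le> e"
  proof (intro allI impI ballI)
    fix n x assume n: "N \<le> n" and x: "x \<in> {c..<c+L}"
    obtain c' where c': "c \<le> c'" "c' \<le> x" "x < c' + L/2^n" "c' + L/2^n \<le> c + L" "dy g n c L x = avg g c' (L/2^n)"
      using dy_loc[OF x L, of n g] by auto
    have ln: "L/2^n \<le> L/2^N" using n L by (intro divide_left_mono) auto
    have "set_integrable lborel {c'..c'+L/2^n} g"
      by (intro borel_integrable_atLeastAtMost' continuous_on_subset[OF g]) auto
    then have i: "set_integrable lborel {c'..<c'+L/2^n} g"
      by (rule set_integrable_subset) auto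
    have "\<bar>avg g c' (L/2^n) - g x\<bar> \<le> e"
    proof (rule avg_near[OF _ i])
      fix y assume y: "y \<in> {c'..<c'+L/2^n}"
      have "dist (g y) (g x) < e"
        using y x c' ln N by (intro dd) (auto simp: dist_real_def)
      then show "\<bar>g y - g x\<bar> \<le> e" by (simp add: dist_real_def)
    qed (use L in simp)
    then show "\<bar>dy g n c L x - g x\<bar> \<le> e" using c' by simp
  qed
  then show ?thesis by blast
qed

definition clamp :: "real \<Rightarrow> real \<Rightarrow> real" where "clamp M y = max (- M) (min M y)"

lemma clamp_cont[continuous_intros]: "continuous_on S f \<Longrightarrow> continuous_on S (\<lambda>x. clamp M (f x))"
  unfolding clamp_def by (intro continuous_intros)

lemma clamp_meas[measurable]: "f \<in> borel_measurable M \<Longrightarrow> (\<lambda>x. clamp K (f x)) \<in> borel_measurable M"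
  unfolding clamp_def by (intro borel_measurable_max borel_measurable_min) auto

lemma clamp_abs: "0 \<le> M \<Longrightarrow> \<bar>clamp M y\<bar> \<le> M" "0 \<le> M \<Longrightarrow> \<bar>clamp M y\<bar> \<le> \<bar>y\<bar>"
  unfolding clamp_def by auto

lemma clamp_tendsto: "(\<lambda>i. clamp (real i) y) \<longlonglongrightarrow> y"
proof -
  obtain N :: nat where "\<bar>y\<bar> \<le> real N" using real_arch_simple by blast
  then have "eventually (\<lambda>i. clamp (real i) y = y) sequentially"
    unfolding eventually_sequentially clamp_def by (intro exI[of _ N]) auto
  then show ?thesis by (rule tendsto_eventually)
qed

lemma AE_lborel_negligible: "negligible N \<Longrightarrow> AE x in lborel. x \<notin> N"
  using AE_not_in[of N lebesgue] by (simp add: negligible_iff_null_sets AE_completion_iff)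

lemma ennreal_add_lt:
  fixes a b :: ennreal
  assumes "a < ennreal x" "b < ennreal y"
  shows "a + b < ennreal x + ennreal y"
proof -
  have "b < top" using assms(2) ennreal_less_top order.strict_trans by blast
  then have bt: "b \<noteq> \<infinity>" by (auto simp: infinity_ennreal_def)
  have "a + b < ennreal x + b"
    using ennreal_add_left_cancel_less[of b a "ennreal x"] assms(1) bt by (simp add: add.commute)
  also have "ennreal x + b < ennreal x + ennreal y"
    using ennreal_add_left_cancel_less[of "ennreal x" b "ennreal y"] assms(2) by simp
  finally show ?thesis .
qed

lemma tendsto_0_ennreal_ex:
  fixes X :: "nat \<Rightarrow> ennreal"
  assumes "X \<longlonglongrightarrow> 0" "0 < e"
  shows "\<exists>n. X n < ennreal e"
proof -
  have "eventually (\<lambda>n. X n < ennreal e) sequentially"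
    using order_tendstoD(2)[OF assms(1)] assms(2) by simp
  then show ?thesis by (auto simp: eventually_sequentially)
qed

lemma cont_approx:
  fixes f :: "real \<Rightarrow> real"
  assumes [measurable]: "f \<in> borel_measurable borel" and i: "set_integrable lborel {a..<b} f" and e: "0 < e"
  shows "\<exists>g. continuous_on UNIV g \<and> (\<integral>\<^sup>+x\<in>{a..<b}. ennreal \<bar>f x - g x\<bar> \<partial>lborel) < ennreal e"
proof -
  let ?I = "indicator {a..<b} :: real \<Rightarrow> real"
  have fin: "(\<integral>\<^sup>+x. ennreal (?I x * \<bar>f x\<bar>) \<partial>lborel) < \<infinity>"
  proof -
    have "integrable lborel (\<lambda>x. ?I x * \<bar>f x\<bar>)"
      using integrable_norm[OF i[unfolded set_integrable_def]] by (simp add: abs_mult)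
    then have "(\<integral>\<^sup>+x. ennreal (norm (?I x * \<bar>f x\<bar>)) \<partial>lborel) < \<infinity>"
      unfolding integrable_iff_bounded by blast
    moreover have "(\<integral>\<^sup>+x. ennreal (norm (?I x * \<bar>f x\<bar>)) \<partial>lborel) = (\<integral>\<^sup>+x. ennreal (?I x * \<bar>f x\<bar>) \<partial>lborel)"
      by (intro nn_integral_cong) (auto split: split_indicator)
    ultimately show ?thesis by simp
  qed
  have "(\<lambda>i. (\<integral>\<^sup>+x. norm (?I x * f x - ?I x * clamp (real i) (f x)) \<partial>lborel)) \<longlonglongrightarrow> 0"
  proof (rule nn_integral_dominated_convergence_norm[where w="\<lambda>x. ?I x * \<bar>f x\<bar>"])
    show "AE x in lborel. norm (?I x * clamp (real j) (f x)) \<le> ?I x * \<bar>f x\<bar>" for j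
      by (intro AE_I2) (auto split: split_indicator simp: clamp_abs)
    show "AE x in lborel. (\<lambda>i. ?I x * clamp (real i) (f x)) \<longlonglongrightarrow> ?I x * f x"
      by (intro AE_I2 tendsto_mult tendsto_const clamp_tendsto)
  qed (use fin in auto)
  from tendsto_0_ennreal_ex[OF this, of "e/2"] obtain M :: nat where M: "(\<integral>\<^sup>+x. norm (?I x * f x - ?I x * clamp (real M) (f x)) \<partial>lborel) < ennreal (e/2)"
    using e by auto
  have "f \<in> borel_measurable lebesgue" using assms(1) by (intro measurable_completion) simp
  then have "f measurable_on UNIV" by (intro lebesgue_measurable_imp_measurable_on) auto
  then obtain N g where N: "negligible N" and gc: "\<And>n. continuous_on UNIV (g n)"
    and gl: "\<And>x. x \<notin> N \<Longrightarrow> (\<lambda>n. g n x) \<longlonglongrightarrow> f x"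
    unfolding measurable_on_def by auto
  have [measurable]: "g n \<in> borel_measurable borel" for n
    using gc by (rule borel_measurable_continuous_onI)
  have "(\<lambda>i. (\<integral>\<^sup>+x. norm (?I x * clamp (real M) (f x) - ?I x * clamp (real M) (g i x)) \<partial>lborel)) \<longlonglongrightarrow> 0"
  proof (rule nn_integral_dominated_convergence_norm[where w="\<lambda>x. ?I x * real M"])
    show "AE x in lborel. norm (?I x * clamp (real M) (g j x)) \<le> ?I x * real M" for j
      by (intro AE_I2) (auto split: split_indicator simp: clamp_abs)
    show "AE x in lborel. (\<lambda>i. ?I x * clamp (real M) (g i x)) \<longlonglongrightarrow> ?I x * clamp (real M) (f x)"
      using AE_lborel_negligible[OF N]
    proof (rule AE_mp, intro AE_I2 impI)
      fix x assume "x \<notin> N"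
      then have "(\<lambda>n. g n x) \<longlonglongrightarrow> f x" by (rule gl)
      then have "(\<lambda>n. clamp (real M) (g n x)) \<longlonglongrightarrow> clamp (real M) (f x)"
        unfolding clamp_def by (intro tendsto_intros)
      then show "(\<lambda>i. ?I x * clamp (real M) (g i x)) \<longlonglongrightarrow> ?I x * clamp (real M) (f x)"
        by (intro tendsto_mult tendsto_const)
    qed
    have "(\<integral>\<^sup>+x. ennreal (?I x * real M) \<partial>lborel) = ennreal (real M) * emeasure lborel {a..<b}"
      by (subst nn_integral_cmult_indicator[symmetric]) (auto intro!: nn_integral_cong split: split_indicator)
    then show "(\<integral>\<^sup>+x. ennreal (?I x * real M) \<partial>lborel) < \<infinity>"
      by (simp add: ennreal_mult_less_top)
  qed auto
  from tendsto_0_ennreal_ex[OF this, of "e/2"] obtain k where k: "(\<integral>\<^sup>+x. norm (?I x * clamp (real M) (f x) - ?I x * clamp (real M) (g k x)) \<partial>lborel) < ennreal (e/2)"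
    using e by auto
  let ?g = "\<lambda>x. clamp (real M) (g k x)"
  have "continuous_on UNIV ?g" by (intro clamp_cont gc)
  moreover have "(\<integral>\<^sup>+x\<in>{a..<b}. ennreal \<bar>f x - ?g x\<bar> \<partial>lborel) < ennreal e"
  proof -
    have "(\<integral>\<^sup>+x\<in>{a..<b}. ennreal \<bar>f x - ?g x\<bar> \<partial>lborel)
        \<le> (\<integral>\<^sup>+x. ennreal (norm (?I x * f x - ?I x * clamp (real M) (f x)))
               + ennreal (norm (?I x * clamp (real M) (f x) - ?I x * clamp (real M) (g k x))) \<partial>lborel)"
    proof (intro nn_integral_mono)
      fix x
      have "\<bar>f x - ?g x\<bar> \<le> \<bar>f x - clamp (real M) (f x)\<bar> + \<bar>clamp (real M) (f x) - ?g x\<bar>" by linarith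
      then show "ennreal \<bar>f x - ?g x\<bar> * indicator {a..<b} x \<le> ennreal (norm (?I x * f x - ?I x * clamp (real M) (f x)))
               + ennreal (norm (?I x * clamp (real M) (f x) - ?I x * clamp (real M) (g k x)))"
        by (auto split: split_indicator simp: ennreal_plus[symmetric] simp del: ennreal_plus intro!: ennreal_leI)
    qed
    also have "\<dots> = (\<integral>\<^sup>+x. norm (?I x * f x - ?I x * clamp (real M) (f x)) \<partial>lborel)
         + (\<integral>\<^sup>+x. norm (?I x * clamp (real M) (f x) - ?I x * clamp (real M) (g k x)) \<partial>lborel)"
      by (rule nn_integral_add) auto
    also have "\<dots> < ennreal (e/2) + ennreal (e/2)"
      using M k by (rule ennreal_add_lt)
    also have "\<dots> = ennreal e" using e by (simp add: ennreal_plus[symmetric] del: ennreal_plus)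
    finally show ?thesis .
  qed
  ultimately show ?thesis by blast
qed

lemma cont_set_integrable_Ico:
  fixes g :: "real \<Rightarrow> real"
  assumes "continuous_on UNIV g" shows "set_integrable lborel {a..<b::real} g"
proof -
  have "set_integrable lborel {a..b} g"
    by (intro borel_integrable_atLeastAtMost' continuous_on_subset[OF assms]) auto
  then show ?thesis by (rule set_integrable_subset) auto
qed

lemma ennreal_tendsto_0I:
  fixes X :: "nat \<Rightarrow> ennreal"
  assumes "\<And>e. 0 < e \<Longrightarrow> eventually (\<lambda>n. X n \<le> ennreal e) sequentially"
  shows "X \<longlonglongrightarrow> 0"
proof (rule order_tendstoI)
  fix a :: ennreal assume "0 < a"
  then obtain b where b: "0 < b" "b < a" using dense by blast
  then have "b \<noteq> top" using top_greatest[of a] by (metis order.strict_trans1 order.strict_implies_not_eq)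
  then obtain e where "b = ennreal e" "0 < e" using b by (cases b) auto
  then show "eventually (\<lambda>n. X n < a) sequentially"
    using assms[of e] b by (auto elim: eventually_mono)
qed auto

lemma dy_L1:
  fixes f :: "real \<Rightarrow> real"
  assumes [measurable]: "f \<in> borel_measurable borel" and int: "\<And>a b. set_integrable lborel {a..<b} f"
    and L: "0 < L"
  shows "(\<lambda>n. \<integral>\<^sup>+x\<in>{c..<c+L}. ennreal \<bar>dy f n c L x - f x\<bar> \<partial>lborel) \<longlonglongrightarrow> 0"
proof (rule ennreal_tendsto_0I)
  fix e :: real assume e: "0 < e"
  obtain g where gc: "continuous_on UNIV g" and
    gf: "(\<integral>\<^sup>+x\<in>{c..<c+L}. ennreal \<bar>f x - g x\<bar> \<partial>lborel) < ennreal (e/3)"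
    using cont_approx[OF _ int[of c "c+L"], of "e/3"] e by auto
  have [measurable]: "g \<in> borel_measurable borel" using gc by (rule borel_measurable_continuous_onI)
  have gi: "set_integrable lborel {a..<b} g" for a b by (rule cont_set_integrable_Ico[OF gc])
  have hi: "set_integrable lborel {a..<b} (\<lambda>x. f x - g x)" for a b
    using int gi by (rule set_integral_diff)
  obtain N where N: "\<forall>n\<ge>N. \<forall>x\<in>{c..<c+L}. \<bar>dy g n c L x - g x\<bar> \<le> e / (3*L)"
    using dy_cont_conv[OF gc L, of "e/(3*L)" c] e L by auto
  show "eventually (\<lambda>n. (\<integral>\<^sup>+x\<in>{c..<c+L}. ennreal \<bar>dy f n c L x - f x\<bar> \<partial>lborel) \<le> ennreal e) sequentially"
    unfolding eventually_sequentially
  proof (intro exI[of _ N] allI impI)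
    fix n assume n: "N \<le> n"
    have "(\<integral>\<^sup>+x\<in>{c..<c+L}. ennreal \<bar>dy f n c L x - f x\<bar> \<partial>lborel)
        \<le> (\<integral>\<^sup>+x. ennreal \<bar>dy (\<lambda>x. f x - g x) n c L x\<bar> * indicator {c..<c+L} x
             + ennreal (e / (3*L)) * indicator {c..<c+L} x + ennreal \<bar>f x - g x\<bar> * indicator {c..<c+L} x \<partial>lborel)"
    proof (intro nn_integral_mono)
      fix x
      show "ennreal \<bar>dy f n c L x - f x\<bar> * indicator {c..<c+L} x
          \<le> ennreal \<bar>dy (\<lambda>x. f x - g x) n c L x\<bar> * indicator {c..<c+L} x
             + ennreal (e / (3*L)) * indicator {c..<c+L} x + ennreal \<bar>f x - g x\<bar> * indicator {c..<c+L} x"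
      proof (cases "x \<in> {c..<c+L}")
        case True
        have d: "dy (\<lambda>x. f x - g x) n c L x = dy f n c L x - dy g n c L x"
          by (rule dy_diff[OF int gi])
        have "\<bar>dy f n c L x - f x\<bar> \<le> \<bar>dy (\<lambda>x. f x - g x) n c L x\<bar> + e / (3*L) + \<bar>f x - g x\<bar>"
          using N[rule_format, OF n True] unfolding d by linarith
        then show ?thesis using True e L
          by (simp add: ennreal_plus[symmetric] del: ennreal_plus)
      qed simp
    qed
    also have "\<dots> = (\<integral>\<^sup>+x\<in>{c..<c+L}. ennreal \<bar>dy (\<lambda>x. f x - g x) n c L x\<bar> \<partial>lborel)
        + (\<integral>\<^sup>+x. ennreal (e / (3*L)) * indicator {c..<c+L} x \<partial>lborel)
        + (\<integral>\<^sup>+x\<in>{c..<c+L}. ennreal \<bar>f x - g x\<bar> \<partial>lborel)"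
      by (subst nn_integral_add, simp_all, subst nn_integral_add, simp_all)
    also have "(\<integral>\<^sup>+x. ennreal (e / (3*L)) * indicator {c..<c+L} x \<partial>lborel) = ennreal (e/3)"
      using L e by (simp add: nn_integral_cmult_indicator ennreal_mult[symmetric])
    also have "(\<integral>\<^sup>+x\<in>{c..<c+L}. ennreal \<bar>dy (\<lambda>x. f x - g x) n c L x\<bar> \<partial>lborel)
        \<le> (\<integral>\<^sup>+x\<in>{c..<c+L}. ennreal \<bar>f x - g x\<bar> \<partial>lborel)"
      by (rule dy_contract[OF hi _ L]) measurable
    also have "(\<integral>\<^sup>+x\<in>{c..<c+L}. ennreal \<bar>f x - g x\<bar> \<partial>lborel) + ennreal (e/3)
        + (\<integral>\<^sup>+x\<in>{c..<c+L}. ennreal \<bar>f x - g x\<bar> \<partial>lborel) \<le> ennreal (e/3) + ennreal (e/3) + ennreal (e/3)"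
      using gf by (intro add_mono) auto
    also have "\<dots> = ennreal e" using e by (simp add: ennreal_plus[symmetric] del: ennreal_plus)
    finally show "(\<integral>\<^sup>+x\<in>{c..<c+L}. ennreal \<bar>dy f n c L x - f x\<bar> \<partial>lborel) \<le> ennreal e"
      by (simp add: add_right_mono)
  qed
qed

lemma dy_ae_subseq:
  fixes f :: "real \<Rightarrow> real"
  assumes [measurable]: "f \<in> borel_measurable borel" and int: "\<And>a b. set_integrable lborel {a..<b} f"
    and L: "0 < L"
  shows "\<exists>r::nat\<Rightarrow>nat. strict_mono r \<and> (AE x in lborel. x \<in> {c..<c+L} \<longrightarrow> (\<lambda>n. dy f (r n) c L x) \<longlonglongrightarrow> f x)"
proof -
  let ?u = "\<lambda>n x. indicator {c..<c+L} x * (dy f n c L x - f x)"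
  have nn: "(\<integral>\<^sup>+x. ennreal \<bar>?u n x\<bar> \<partial>lborel) = (\<integral>\<^sup>+x\<in>{c..<c+L}. ennreal \<bar>dy f n c L x - f x\<bar> \<partial>lborel)" for n
    by (intro nn_integral_cong) (auto split: split_indicator)
  have fi: "(\<integral>\<^sup>+x\<in>{c..<c+L}. ennreal \<bar>f x\<bar> \<partial>lborel) < \<infinity>"
  proof -
    have "integrable lborel (\<lambda>x. norm (indicator {c..<c+L} x *\<^sub>R f x))"
      using int[of c "c+L"] unfolding set_integrable_def by (rule integrable_norm)
    then have "(\<integral>\<^sup>+x. ennreal (norm (indicator {c..<c+L} x *\<^sub>R f x)) \<partial>lborel) < \<infinity>"
      by (simp add: integrable_iff_bounded)
    moreover have "(\<integral>\<^sup>+x. ennreal (norm (indicator {c..<c+L} x *\<^sub>R f x)) \<partial>lborel) = (\<integral>\<^sup>+x\<in>{c..<c+L}. ennreal \<bar>f x\<bar> \<partial>lborel)"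
      by (intro nn_integral_cong) (auto split: split_indicator)
    ultimately show ?thesis by simp
  qed
  have fin: "(\<integral>\<^sup>+x\<in>{c..<c+L}. ennreal \<bar>dy f n c L x - f x\<bar> \<partial>lborel) < \<infinity>" for n
  proof -
    have "(\<integral>\<^sup>+x\<in>{c..<c+L}. ennreal \<bar>dy f n c L x - f x\<bar> \<partial>lborel)
        \<le> (\<integral>\<^sup>+x. ennreal \<bar>dy f n c L x\<bar> * indicator {c..<c+L} x + ennreal \<bar>f x\<bar> * indicator {c..<c+L} x \<partial>lborel)"
      by (intro nn_integral_mono) (auto split: split_indicator simp: ennreal_plus[symmetric] simp del: ennreal_plus intro!: ennreal_leI)
    also have "\<dots> = (\<integral>\<^sup>+x\<in>{c..<c+L}. ennreal \<bar>dy f n c L x\<bar> \<partial>lborel) + (\<integral>\<^sup>+x\<in>{c..<c+L}. ennreal \<bar>f x\<bar> \<partial>lborel)"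
      by (rule nn_integral_add) auto
    also have "\<dots> \<le> (\<integral>\<^sup>+x\<in>{c..<c+L}. ennreal \<bar>f x\<bar> \<partial>lborel) + (\<integral>\<^sup>+x\<in>{c..<c+L}. ennreal \<bar>f x\<bar> \<partial>lborel)"
      by (intro add_mono dy_contract int L) auto
    also have "\<dots> < \<infinity>" using fi by (simp add: ennreal_add_less_top infinity_ennreal_def)
    finally show ?thesis .
  qed
  have ui: "integrable lborel (?u n)" for n
    by (rule integrableI_bounded) (use fin nn in auto)
  have "(\<lambda>n. (\<integral>x. norm (?u n x) \<partial>lborel)) \<longlonglongrightarrow> 0"
  proof -
    have "(\<integral>x. norm (?u n x) \<partial>lborel) = enn2real (\<integral>\<^sup>+x\<in>{c..<c+L}. ennreal \<bar>dy f n c L x - f x\<bar> \<partial>lborel)" for n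
      by (subst integral_eq_nn_integral) (auto simp: nn)
    moreover have "(\<lambda>n. enn2real (\<integral>\<^sup>+x\<in>{c..<c+L}. ennreal \<bar>dy f n c L x - f x\<bar> \<partial>lborel)) \<longlonglongrightarrow> 0"
      using dy_L1[OF _ int L, of c] by (intro tendsto_enn2real) auto
    ultimately show ?thesis by simp
  qed
  from tendsto_L1_AE_subseq[OF ui this]
  obtain r :: "nat \<Rightarrow> nat" where r: "strict_mono r" "AE x in lborel. (\<lambda>n. ?u (r n) x) \<longlonglongrightarrow> 0"
    by blast
  have "AE x in lborel. x \<in> {c..<c+L} \<longrightarrow> (\<lambda>n. dy f (r n) c L x) \<longlonglongrightarrow> f x"
    using r(2)
  proof (rule AE_mp, intro AE_I2 impI)
    fix x assume "(\<lambda>n. ?u (r n) x) \<longlonglongrightarrow> 0" "x \<in> {c..<c+L}"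
    then have "(\<lambda>n. dy f (r n) c L x - f x) \<longlonglongrightarrow> 0" by simp
    then have "(\<lambda>n. (dy f (r n) c L x - f x) + f x) \<longlonglongrightarrow> 0 + f x" by (intro tendsto_intros)
    then show "(\<lambda>n. dy f (r n) c L x) \<longlonglongrightarrow> f x" by simp
  qed
  then show ?thesis using r(1) by blast
qed

lemma exp_bound:
  fixes \<phi> :: "real \<Rightarrow> real"
  assumes [measurable]: "\<phi> \<in> borel_measurable borel" and int: "\<And>a b. set_integrable lborel {a..<b} \<phi>"
    and L: "0 < L" and W: "Wd \<phi> c L \<le> ennreal M" and M: "0 \<le> M"
  shows "(\<integral>\<^sup>+x\<in>{c..<c+L}. ennreal (exp (t * (\<phi> x - avg \<phi> c L))) \<partial>lborel) \<le> ennreal (L * exp (t^2 * M / 2))"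
proof -
  obtain r :: "nat \<Rightarrow> nat" where r: "AE x in lborel. x \<in> {c..<c+L} \<longrightarrow> (\<lambda>n. dy \<phi> (r n) c L x) \<longlonglongrightarrow> \<phi> x"
    using dy_ae_subseq[OF _ int L, of c] by auto
  let ?m = "avg \<phi> c L"
  let ?F = "\<lambda>n x. ennreal (exp (t * (dy \<phi> (r n) c L x - ?m))) * indicator {c..<c+L} x"
  have "(\<integral>\<^sup>+x\<in>{c..<c+L}. ennreal (exp (t * (\<phi> x - ?m))) \<partial>lborel) = (\<integral>\<^sup>+x. liminf (\<lambda>n. ?F n x) \<partial>lborel)"
  proof (rule nn_integral_cong_AE)
    show "AE x in lborel. ennreal (exp (t * (\<phi> x - ?m))) * indicator {c..<c+L} x = liminf (\<lambda>n. ?F n x)"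
      using r
    proof (rule AE_mp, intro AE_I2 impI)
      fix x assume x: "x \<in> {c..<c+L} \<longrightarrow> (\<lambda>n. dy \<phi> (r n) c L x) \<longlonglongrightarrow> \<phi> x"
      show "ennreal (exp (t * (\<phi> x - ?m))) * indicator {c..<c+L} x = liminf (\<lambda>n. ?F n x)"
      proof (cases "x \<in> {c..<c+L}")
        case True
        then have "(\<lambda>n. dy \<phi> (r n) c L x) \<longlonglongrightarrow> \<phi> x" using x by simp
        then have "(\<lambda>n. ?F n x) \<longlonglongrightarrow> ennreal (exp (t * (\<phi> x - ?m))) * indicator {c..<c+L} x"
          using True by (auto intro!: tendsto_intros)
        then show ?thesis by (simp add: lim_imp_Liminf)
      qed (simp add: Liminf_const)
    qed
  qed
  also have "\<dots> \<le> liminf (\<lambda>n. \<integral>\<^sup>+x. ?F n x \<partial>lborel)"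
    by (rule nn_integral_liminf) measurable
  also have "\<dots> \<le> limsup (\<lambda>n. \<integral>\<^sup>+x. ?F n x \<partial>lborel)"
    by (rule Liminf_le_Limsup) simp
  also have "\<dots> \<le> ennreal (L * exp (t^2 * M / 2))"
  proof (rule Limsup_bounded, intro always_eventually allI)
    fix n
    have "tr \<phi> (r n) c L \<le> M"
      using order_trans[OF tr_le_Wd[OF _ L, of \<phi> "r n" c] W] M by simp
    then have "L * exp (t^2 * tr \<phi> (r n) c L / 2) \<le> L * exp (t^2 * M / 2)"
      using L by (auto intro!: mult_left_mono divide_right_mono)
    then show "(\<integral>\<^sup>+x. ?F n x \<partial>lborel) \<le> ennreal (L * exp (t^2 * M / 2))"
      using exp_bound_dy[OF int L, where c=c and t=t and n="r n"] by (meson ennreal_leI order_trans)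
  qed
  finally show ?thesis .
qed

definition Wtot :: "(real \<Rightarrow> real) \<Rightarrow> ennreal" where
  "Wtot \<phi> = (\<integral>\<^sup>+s. (\<integral>\<^sup>+t. Gk \<phi> s t \<partial>lborel) \<partial>lborel)"

lemma Wd_le_Wtot: "Wd \<phi> c L \<le> Wtot \<phi>"
  unfolding Wd_def Wtot_def
  by (intro nn_integral_mono) (auto split: split_indicator intro!: mult_right_le_one_le nn_integral_mono)

lemma loc_integrable:
  fixes \<phi> :: "real \<Rightarrow> real"
  assumes [measurable]: "\<phi> \<in> borel_measurable borel" and W: "Wtot \<phi> < \<infinity>"
  shows "set_integrable lborel {a..<b} \<phi>"
proof (cases "a < b")
  case False
  then have "{a..<b} = {}" by auto
  then show ?thesis by (simp add: set_integrable_def)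
next
  case True
  define L where "L = b - a"
  have L: "0 < L" and b: "b = a + L" using True by (auto simp: L_def)
  have Wf: "Wd \<phi> a L < \<infinity>" using Wd_le_Wtot[of \<phi> a L] W by (simp add: le_less_trans)
  have "\<exists>s0\<in>{a..<a+L}. (\<integral>\<^sup>+t\<in>{a..<a+L}. Gk \<phi> s0 t \<partial>lborel) < \<infinity>"
  proof (rule ccontr)
    assume "\<not> ?thesis"
    then have inf: "\<And>s. s \<in> {a..<a+L} \<Longrightarrow> (\<integral>\<^sup>+t\<in>{a..<a+L}. Gk \<phi> s t \<partial>lborel) = \<infinity>"
      by (auto simp: top_unique less_top[symmetric])
    have "Wd \<phi> a L = (\<integral>\<^sup>+s. \<infinity> * indicator {a..<a+L} s \<partial>lborel)"
      unfolding Wd_def by (intro nn_integral_cong) (auto split: split_indicator simp: inf)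
    also have "\<dots> = \<infinity>" using L by (simp add: nn_integral_cmult_indicator ennreal_mult_top)
    finally show False using Wf by simp
  qed
  then obtain s0 where s0: "s0 \<in> {a..<a+L}" and fin: "(\<integral>\<^sup>+t\<in>{a..<a+L}. Gk \<phi> s0 t \<partial>lborel) < \<infinity>"
    by blast
  have "(\<integral>\<^sup>+t\<in>{a..<a+L}. ennreal ((\<phi> t - \<phi> s0)^2) \<partial>lborel)
      \<le> (\<integral>\<^sup>+t. ennreal (L^2) * (Gk \<phi> s0 t * indicator {a..<a+L} t) \<partial>lborel)"
  proof (intro nn_integral_mono)
    fix t
    show "ennreal ((\<phi> t - \<phi> s0)^2) * indicator {a..<a+L} t \<le> ennreal (L^2) * (Gk \<phi> s0 t * indicator {a..<a+L} t)"
    proof (cases "t \<in> {a..<a+L} \<and> t \<noteq> s0")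
      case True
      have d: "0 < (s0 - t)^2" "(s0 - t)^2 \<le> L^2" using True s0
        by (auto simp: abs_le_square_iff[symmetric] intro!: abs_leI)
      have "(\<phi> t - \<phi> s0)^2 \<le> L^2 * ((\<phi> s0 - \<phi> t)^2 / (s0 - t)^2)"
      proof -
        have "(\<phi> t - \<phi> s0)^2 = (s0 - t)^2 * ((\<phi> s0 - \<phi> t)^2 / (s0 - t)^2)"
          using d by (simp add: power2_commute)
        also have "\<dots> \<le> L^2 * ((\<phi> s0 - \<phi> t)^2 / (s0 - t)^2)"
          using d by (intro mult_right_mono) auto
        finally show ?thesis .
      qed
      then show ?thesis using True unfolding Gk_def
        by (simp add: ennreal_mult[symmetric] ennreal_leI)
    next
      case False
      then show ?thesis by (auto split: split_indicator)
    qed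
  qed
  also have "\<dots> = ennreal (L^2) * (\<integral>\<^sup>+t\<in>{a..<a+L}. Gk \<phi> s0 t \<partial>lborel)"
    by (rule nn_integral_cmult) measurable
  also have "\<dots> < \<infinity>" using fin by (simp add: ennreal_mult_less_top)
  finally have "set_integrable lborel {a..<a+L} (\<lambda>t. \<phi> t - \<phi> s0)"
    using sq_fin_integrable(2)[of "\<lambda>t. \<phi> t - \<phi> s0" a L] by simp
  then have "set_integrable lborel {a..<a+L} (\<lambda>t. (\<phi> t - \<phi> s0) + \<phi> s0)"
    by (intro set_integral_add) auto
  then show ?thesis by (simp add: b)
qed

lemma exp_bound_global:
  fixes \<phi> :: "real \<Rightarrow> real"
  assumes [measurable]: "\<phi> \<in> borel_measurable borel" and W: "Wtot \<phi> < \<infinity>" and ab: "a < b"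
  shows "(\<integral>\<^sup>+x\<in>{a..<b}. ennreal (exp (t * (\<phi> x - avg \<phi> a (b - a)))) \<partial>lborel)
          \<le> ennreal ((b - a) * exp (t^2 * enn2real (Wtot \<phi>) / 2))"
proof -
  have "Wd \<phi> a (b - a) \<le> ennreal (enn2real (Wtot \<phi>))"
    using Wd_le_Wtot[of \<phi> a "b-a"] W by (simp add: ennreal_enn2real_if less_top[symmetric])
  from exp_bound[OF _ loc_integrable[OF _ W] _ this] ab show ?thesis by simp
qed

lemma rat_ext:
  fixes g :: "real \<Rightarrow> real"
  assumes U: "open U" and g: "continuous_on U g" and r: "\<And>p::rat. real_of_rat p \<in> U \<Longrightarrow> g (real_of_rat p) \<le> c"
    and y: "y \<in> U"
  shows "g y \<le> c"
proof (rule ccontr)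
  assume "\<not> g y \<le> c"
  then have yV: "y \<in> U \<inter> g -` {c<..}" using y by auto
  have "open (U \<inter> g -` {c<..})" by (rule continuous_open_preimage[OF g U]) auto
  then obtain e where e: "0 < e" "ball y e \<subseteq> U \<inter> g -` {c<..}" using yV by (meson openE)
  obtain q where q: "q \<in> \<rat>" "y - e < q" "q < y + e" using Rats_dense_in_real[of "y - e" "y + e"] e by auto
  then obtain p where p: "q = real_of_rat p" by (auto simp: Rats_def)
  have "q \<in> ball y e" using q by (auto simp: dist_real_def)
  then have "q \<in> U" "g q > c" using e by auto
  then show False using r[of p] p by auto
qed

definition Qd :: "(real \<Rightarrow> real) \<Rightarrow> real \<Rightarrow> real \<Rightarrow> real" where
  "Qd h x y = (h (x + y) - h x) / y"

definition Pd :: "(real \<Rightarrow> real) \<Rightarrow> real \<Rightarrow> bool" where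
  "Pd h x \<longleftrightarrow> (\<forall>k::nat. \<exists>m::nat. \<forall>p::rat. \<forall>q::rat.
      real_of_rat p \<noteq> 0 \<longrightarrow> real_of_rat q \<noteq> 0 \<longrightarrow> \<bar>real_of_rat p\<bar> < 1 / (real m + 1) \<longrightarrow> \<bar>real_of_rat q\<bar> < 1 / (real m + 1) \<longrightarrow>
      \<bar>Qd h x (real_of_rat p) - Qd h x (real_of_rat q)\<bar> \<le> 1 / (real k + 1))"

lemma Pd_measurable:
  assumes [measurable]: "h \<in> borel_measurable borel"
  shows "Measurable.pred borel (Pd h)"
  unfolding Pd_def Qd_def by measurable

lemma abs_tri2: "\<bar>a - l\<bar> < e \<Longrightarrow> \<bar>b - l\<bar> < e \<Longrightarrow> \<bar>a - b\<bar> \<le> 2 * (e::real)"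
  by arith

lemma diff_imp_Pd:
  assumes "DERIV h x :> l"
  shows "Pd h x"
  unfolding Pd_def
proof
  fix k :: nat
  have lim: "(Qd h x \<longlongrightarrow> l) (at 0)" using assms by (simp add: DERIV_def Qd_def[abs_def])
  have "0 < 1 / (2 * (real k + 1))" by simp
  then obtain d where d: "0 < d" "\<And>y. y \<noteq> 0 \<Longrightarrow> \<bar>y\<bar> < d \<Longrightarrow> \<bar>Qd h x y - l\<bar> < 1 / (2 * (real k + 1))"
    using lim unfolding LIM_eq by (metis diff_0_right real_norm_def)
  obtain m :: nat where m: "1 / (real m + 1) < d"
  proof -
    obtain m :: nat where "1 / d < real m" using reals_Archimedean2 by blast
    then have "1 / (real m + 1) < d" using d by (simp add: field_simps)
    then show ?thesis using that by blast
  qed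
  show "\<exists>m::nat. \<forall>p::rat. \<forall>q::rat.
      real_of_rat p \<noteq> 0 \<longrightarrow> real_of_rat q \<noteq> 0 \<longrightarrow> \<bar>real_of_rat p\<bar> < 1 / (real m + 1) \<longrightarrow> \<bar>real_of_rat q\<bar> < 1 / (real m + 1) \<longrightarrow>
      \<bar>Qd h x (real_of_rat p) - Qd h x (real_of_rat q)\<bar> \<le> 1 / (real k + 1)"
  proof (intro exI[of _ m] allI impI)
    fix p q :: rat
    assume "real_of_rat p \<noteq> 0" "real_of_rat q \<noteq> 0" "\<bar>real_of_rat p\<bar> < 1 / (real m + 1)" "\<bar>real_of_rat q\<bar> < 1 / (real m + 1)"
    then have "\<bar>Qd h x (real_of_rat p) - l\<bar> < 1 / (2 * (real k + 1))" "\<bar>Qd h x (real_of_rat q) - l\<bar> < 1 / (2 * (real k + 1))"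
      using d(2) m by auto
    then have "\<bar>Qd h x (real_of_rat p) - Qd h x (real_of_rat q)\<bar> \<le> 2 * (1/(2*(real k+1)))"
      using abs_tri2[of "Qd h x (real_of_rat p)" l "1/(2*(real k+1))" "Qd h x (real_of_rat q)"] by blast
    moreover have "2 * (1/(2*(real k+1))) = 1 / (real k + 1)" by (simp add: divide_simps)
    ultimately show "\<bar>Qd h x (real_of_rat p) - Qd h x (real_of_rat q)\<bar> \<le> 1 / (real k + 1)"
      by simp
  qed
qed

lemma Qd_cont:
  assumes hc: "continuous_on UNIV h"
  shows "continuous_on (- {0}) (Qd h x)"
proof -
  have "continuous_on (- {0}) (\<lambda>y. h (x + y))"
    by (rule continuous_on_compose2[OF hc]) (auto intro: continuous_intros)
  then show ?thesis unfolding Qd_def[abs_def] by (intro continuous_intros) auto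
qed

lemma arch_inv: "0 < (e::real) \<Longrightarrow> \<exists>k::nat. 1 / (real k + 1) < e"
proof -
  assume e: "0 < e"
  obtain k :: nat where "1 / e < real k" using reals_Archimedean2 by blast
  then have "1 / (real k + 1) < e" using e by (simp add: field_simps)
  then show ?thesis by blast
qed

lemma Pd_imp_diff:
  assumes hc: "continuous_on UNIV h" and P: "Pd h x"
  shows "\<exists>l. DERIV h x :> l"
proof -
  have Qc: "continuous_on (- {0}) (Qd h x)" by (rule Qd_cont[OF hc])
  have R: "\<exists>m::nat. \<forall>y z. y \<noteq> 0 \<longrightarrow> z \<noteq> 0 \<longrightarrow> \<bar>y\<bar> < 1 / (real m + 1) \<longrightarrow> \<bar>z\<bar> < 1 / (real m + 1) \<longrightarrow>
      \<bar>Qd h x y - Qd h x z\<bar> \<le> 1 / (real k + 1)" for k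
  proof -
    obtain m :: nat where m: "\<And>p q. real_of_rat p \<noteq> 0 \<Longrightarrow> real_of_rat q \<noteq> 0 \<Longrightarrow> \<bar>real_of_rat p\<bar> < 1 / (real m + 1) \<Longrightarrow>
        \<bar>real_of_rat q\<bar> < 1 / (real m + 1) \<Longrightarrow> \<bar>Qd h x (real_of_rat p) - Qd h x (real_of_rat q)\<bar> \<le> 1 / (real k + 1)"
      using P unfolding Pd_def by blast
    define U where "U = ball (0::real) (1 / (real m + 1)) - {0}"
    have U: "open U" unfolding U_def by (intro open_Diff) auto
    have Ui: "y \<in> U \<longleftrightarrow> y \<noteq> 0 \<and> \<bar>y\<bar> < 1 / (real m + 1)" for y by (auto simp: U_def)
    have cU: "continuous_on U (Qd h x)" by (rule continuous_on_subset[OF Qc]) (auto simp: U_def)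
    have step1: "\<bar>Qd h x y - Qd h x (real_of_rat q)\<bar> \<le> 1 / (real k + 1)" if "y \<in> U" "real_of_rat q \<in> U" for y q
      by (rule rat_ext[OF U _ _ that(1)]) (use that m Ui in \<open>auto intro!: continuous_intros cU\<close>)
    have step2: "\<bar>Qd h x y - Qd h x z\<bar> \<le> 1 / (real k + 1)" if "y \<in> U" "z \<in> U" for y z
      by (rule rat_ext[OF U _ _ that(2)]) (use that step1 in \<open>auto intro!: continuous_intros cU\<close>)
    show ?thesis using step2 Ui by blast
  qed
  define s where "s n = Qd h x (1 / (real n + 1))" for n
  have sR: "\<bar>Qd h x y - s n\<bar> \<le> 1 / (real k + 1)"
    if "y \<noteq> 0" "\<bar>y\<bar> < 1 / (real m + 1)" "n \<ge> m + 1"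
       "\<forall>y z. y \<noteq> 0 \<longrightarrow> z \<noteq> 0 \<longrightarrow> \<bar>y\<bar> < 1 / (real m + 1) \<longrightarrow> \<bar>z\<bar> < 1 / (real m + 1) \<longrightarrow>
          \<bar>Qd h x y - Qd h x z\<bar> \<le> 1 / (real k + 1)" for y n m k
  proof -
    have "1 / (real n + 1) < 1 / (real m + 1)" using that(3) by (intro divide_strict_left_mono) auto
    then show ?thesis using that unfolding s_def by auto
  qed
  have "Cauchy s"
  proof (rule metric_CauchyI)
    fix e :: real assume "0 < e"
    then obtain k :: nat where k: "1 / (real k + 1) < e" using arch_inv by blast
    obtain m where m: "\<forall>y z. y \<noteq> 0 \<longrightarrow> z \<noteq> 0 \<longrightarrow> \<bar>y\<bar> < 1 / (real m + 1) \<longrightarrow> \<bar>z\<bar> < 1 / (real m + 1) \<longrightarrow>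
          \<bar>Qd h x y - Qd h x z\<bar> \<le> 1 / (real k + 1)" using R by blast
    show "\<exists>M. \<forall>a\<ge>M. \<forall>b\<ge>M. dist (s a) (s b) < e"
    proof (intro exI[of _ "m+1"] allI impI)
      fix a b :: nat assume a: "m + 1 \<le> a" and b: "m + 1 \<le> b"
      have "1 / (real a + 1) < 1 / (real m + 1)" using a by (intro divide_strict_left_mono) auto
      then have "\<bar>s a - s b\<bar> \<le> 1 / (real k + 1)" using sR[OF _ _ b m] by (simp add: s_def)
      then show "dist (s a) (s b) < e" using k by (simp add: dist_real_def)
    qed
  qed
  then obtain l where l: "s \<longlonglongrightarrow> l" using Cauchy_convergent_iff convergent_def by blast
  have "(Qd h x \<longlongrightarrow> l) (at 0)"
  proof (rule LIM_I)
    fix e :: real assume "0 < e"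
    then obtain k :: nat where k: "1 / (real k + 1) < e" using arch_inv by blast
    obtain m where m: "\<forall>y z. y \<noteq> 0 \<longrightarrow> z \<noteq> 0 \<longrightarrow> \<bar>y\<bar> < 1 / (real m + 1) \<longrightarrow> \<bar>z\<bar> < 1 / (real m + 1) \<longrightarrow>
          \<bar>Qd h x y - Qd h x z\<bar> \<le> 1 / (real k + 1)" using R by blast
    show "\<exists>d>0. \<forall>y. y \<noteq> 0 \<and> norm (y - 0) < d \<longrightarrow> norm (Qd h x y - l) < e"
    proof (intro exI[of _ "1 / (real m + 1)"] conjI allI impI)
      fix y :: real assume y: "y \<noteq> 0 \<and> norm (y - 0) < 1 / (real m + 1)"
      have "(\<lambda>n. \<bar>Qd h x y - s n\<bar>) \<longlonglongrightarrow> \<bar>Qd h x y - l\<bar>" by (intro tendsto_intros l)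
      moreover have "\<exists>N. \<forall>n\<ge>N. \<bar>Qd h x y - s n\<bar> \<le> 1 / (real k + 1)"
        using sR[OF _ _ _ m] y by auto
      ultimately have "\<bar>Qd h x y - l\<bar> \<le> 1 / (real k + 1)" by (rule LIMSEQ_le_const2)
      then show "norm (Qd h x y - l) < e" using k by simp
    qed simp
  qed
  then have "DERIV h x :> l" by (simp add: DERIV_def Qd_def[abs_def])
  then show ?thesis by blast
qed

lemma deriv_borel:
  fixes h :: "real \<Rightarrow> real"
  assumes hc: "continuous_on UNIV h"
  shows "deriv h \<in> borel_measurable borel"
proof -
  have [measurable]: "h \<in> borel_measurable borel" using hc by (rule borel_measurable_continuous_onI)
  have [measurable]: "Measurable.pred borel (Pd h)" by (rule Pd_measurable) measurable
  define c0 :: real where "c0 = (SOME D. False)"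
  have eq: "deriv h x = (if Pd h x then lim (\<lambda>n. Qd h x (1 / (real n + 1))) else c0)" for x
  proof (cases "Pd h x")
    case True
    then obtain l where l: "DERIV h x :> l" using Pd_imp_diff[OF hc] by blast
    have "(Qd h x \<longlongrightarrow> l) (at 0)" using l by (simp add: DERIV_def Qd_def[abs_def])
    moreover have "filterlim (\<lambda>n. 1 / (real n + 1)) (at 0) sequentially"
    proof -
      have "(\<lambda>n. 1 / (real n + 1)) \<longlonglongrightarrow> 0"
        using LIMSEQ_inverse_real_of_nat by (simp add: inverse_eq_divide add.commute)
      then show ?thesis by (intro filterlim_atI) auto
    qed
    ultimately have "(\<lambda>n. Qd h x (1 / (real n + 1))) \<longlonglongrightarrow> l" by (rule filterlim_compose)
    then show ?thesis using True l by (simp add: DERIV_imp_deriv limI)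
  next
    case False
    then have "\<not> (\<exists>l. DERIV h x :> l)" using diff_imp_Pd by blast
    then have "(\<lambda>D. DERIV h x :> D) = (\<lambda>D. False)" by auto
    then show ?thesis using False by (simp add: deriv_def c0_def)
  qed
  have "(\<lambda>x. if Pd h x then lim (\<lambda>n. Qd h x (1 / (real n + 1))) else c0) \<in> borel_measurable borel"
    unfolding Qd_def by measurable
  moreover have "deriv h = (\<lambda>x. if Pd h x then lim (\<lambda>n. Qd h x (1 / (real n + 1))) else c0)"
    by (rule ext) (rule eq)
  ultimately show ?thesis by simp
qed

lemma AE_lebesgue_neq: "AE x in lebesgue. x \<noteq> (c::real)"
  using AE_lborel_singleton[of c] by (simp add: AE_completion_iff)

lemma conv_integrable:
  fixes f :: "real \<Rightarrow> real"
  assumes [measurable]: "f \<in> borel_measurable borel"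
  shows "set_integrable lebesgue {a..b} f \<longleftrightarrow> set_integrable lborel {a..<b} f"
proof -
  have m1: "(\<lambda>x. indicator {a..b} x *\<^sub>R f x) \<in> borel_measurable lebesgue"
    by (intro measurable_completion) (simp, measurable)
  have m2: "(\<lambda>x. indicator {a..<b} x *\<^sub>R f x) \<in> borel_measurable lebesgue"
    by (intro measurable_completion) (simp, measurable)
  have ae: "AE x in lebesgue. indicator {a..b} x *\<^sub>R f x = indicator {a..<b} x *\<^sub>R f x"
    using AE_lebesgue_neq[of b] by eventually_elim (auto split: split_indicator)
  have "set_integrable lebesgue {a..b} f \<longleftrightarrow> integrable lebesgue (\<lambda>x. indicator {a..<b} x *\<^sub>R f x)"
    unfolding set_integrable_def by (rule integrable_cong_AE[OF m1 m2 ae])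
  also have "\<dots> \<longleftrightarrow> integrable lborel (\<lambda>x. indicator {a..<b} x *\<^sub>R f x)"
    by (rule integrable_completion) measurable
  finally show ?thesis by (simp add: set_integrable_def)
qed

lemma conv_int:
  fixes f :: "real \<Rightarrow> real"
  assumes [measurable]: "f \<in> borel_measurable borel"
  shows "(LINT x:{a..b}|lebesgue. f x) = (LINT x:{a..<b}|lborel. f x)"
proof -
  have m1: "(\<lambda>x. indicator {a..b} x *\<^sub>R f x) \<in> borel_measurable lebesgue"
    by (intro measurable_completion) (simp, measurable)
  have m2: "(\<lambda>x. indicator {a..<b} x *\<^sub>R f x) \<in> borel_measurable lebesgue"
    by (intro measurable_completion) (simp, measurable)
  have ae: "AE x in lebesgue. indicator {a..b} x *\<^sub>R f x = indicator {a..<b} x *\<^sub>R f x"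
    using AE_lebesgue_neq[of b] by eventually_elim (auto split: split_indicator)
  have "(LINT x:{a..b}|lebesgue. f x) = integral\<^sup>L lebesgue (\<lambda>x. indicator {a..<b} x *\<^sub>R f x)"
    unfolding set_lebesgue_integral_def by (rule integral_cong_AE[OF m1 m2 ae])
  also have "\<dots> = integral\<^sup>L lborel (\<lambda>x. indicator {a..<b} x *\<^sub>R f x)"
    by (rule integral_completion) measurable
  finally show ?thesis by (simp add: set_lebesgue_integral_def)
qed

lemma quad_real:
  fixes S U \<mu> :: real
  assumes mu: "0 \<le> \<mu>" and q: "\<And>l. 0 \<le> S - 2*l*U + l^2*\<mu>"
  shows "U^2 \<le> \<mu> * S"
proof (cases "\<mu> = 0")
  case True
  have "U = 0"
  proof (rule ccontr)
    assume U: "U \<noteq> 0"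
    have "0 \<le> S - 2*((S+1)/(2*U))*U" using q[of "(S+1)/(2*U)"] True by simp
    also have "\<dots> = -1" using U by (simp add: field_simps)
    finally show False by simp
  qed
  then show ?thesis using True by simp
next
  case False
  then have mu': "0 < \<mu>" using mu by simp
  have "0 \<le> S - 2*(U/\<mu>)*U + (U/\<mu>)^2*\<mu>" by (rule q)
  also have "\<dots> = S - U^2/\<mu>" using mu' by (simp add: power2_eq_square field_simps)
  finally show ?thesis using mu' by (simp add: field_simps)
qed

lemma cs_gen:
  fixes u :: "'a \<Rightarrow> real"
  assumes i1: "set_integrable M A u" and i2: "set_integrable M A (\<lambda>x. (u x)^2)"
    and A: "A \<in> sets M" "emeasure M A < \<infinity>"
  shows "(LINT x:A|M. u x)^2 \<le> measure M A * (LINT x:A|M. (u x)^2)"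
proof (rule quad_real)
  show "0 \<le> measure M A" by simp
  fix l :: real
  have ic: "set_integrable M A (\<lambda>x. c)" for c :: real
    unfolding set_integrable_def using A
    by (simp only: real_scaleR_def) (intro integrable_mult_left integrable_real_indicator, auto)
  have "0 \<le> (LINT x:A|M. (u x - l)^2)"
    unfolding set_lebesgue_integral_def by (intro integral_nonneg_AE) (auto split: split_indicator)
  also have "(LINT x:A|M. (u x - l)^2) = (LINT x:A|M. (u x)^2 - (2*l) * u x + l^2)"
    by (intro set_lebesgue_integral_cong A) (auto simp: power2_eq_square algebra_simps)
  also have "\<dots> = (LINT x:A|M. (u x)^2) - 2*l*(LINT x:A|M. u x) + l^2 * measure M A"
    using i1 i2 ic A by (simp add: set_integral_add set_integral_diff set_integral_const less_top)
  finally show "0 \<le> (LINT x:A|M. (u x)^2) - 2*l*(LINT x:A|M. u x) + l^2 * measure M A" .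
qed

lemma nn_to_integrable:
  fixes f :: "real \<Rightarrow> real"
  assumes [measurable]: "f \<in> borel_measurable borel" and nn: "\<And>x. 0 \<le> f x"
    and fin: "(\<integral>\<^sup>+x\<in>{a..<b}. ennreal (f x) \<partial>lborel) \<le> ennreal B" and B0: "0 \<le> B"
  shows "set_integrable lborel {a..<b} f" "(LINT x:{a..<b}|lborel. f x) \<le> B"
proof -
  have eq: "(\<integral>\<^sup>+x. ennreal (indicator {a..<b} x *\<^sub>R f x) \<partial>lborel) = (\<integral>\<^sup>+x\<in>{a..<b}. ennreal (f x) \<partial>lborel)"
    by (intro nn_integral_cong) (auto split: split_indicator)
  show i: "set_integrable lborel {a..<b} f"
    unfolding set_integrable_def
    by (rule integrableI_nonneg) (use eq fin nn in \<open>auto split: split_indicator simp: le_less_trans\<close>)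
  have "ennreal (LINT x:{a..<b}|lborel. f x) = (\<integral>\<^sup>+x. ennreal (indicator {a..<b} x *\<^sub>R f x) \<partial>lborel)"
    unfolding set_lebesgue_integral_def
    by (rule nn_integral_eq_integral[symmetric]) (use i nn in \<open>auto simp: set_integrable_def split: split_indicator\<close>)
  then have "ennreal (LINT x:{a..<b}|lborel. f x) \<le> ennreal B" using eq fin by simp
  then show "(LINT x:{a..<b}|lborel. f x) \<le> B"
    using B0 by simp
qed

lemma main_local:
  fixes \<phi> w :: "real \<Rightarrow> real"
  assumes [measurable]: "\<phi> \<in> borel_measurable borel" "w \<in> borel_measurable borel"
    and W: "Wtot \<phi> < \<infinity>" and we: "AE x in lebesgue. w x = exp (\<phi> x)" and ab: "a < b"
  shows "set_integrable lebesgue {a..b} w \<and>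
    (\<forall>E\<in>sets lebesgue. E \<subseteq> {a..b} \<longrightarrow>
       (LINT x:E|lebesgue. w x) \<le> exp (enn2real (Wtot \<phi>)) * (measure lebesgue E / (b - a)) powr (1/2) * (LINT x:{a..b}|lebesgue. w x))"
proof -
  define K where "K = enn2real (Wtot \<phi>)"
  define L where "L = b - a"
  define m where "m = avg \<phi> a L"
  define g where "g x = exp (\<phi> x - m)" for x
  have L: "0 < L" using ab by (simp add: L_def)
  have bL: "b = a + L" by (simp add: L_def)
  have [measurable]: "g \<in> borel_measurable borel" unfolding g_def by measurable
  have F1: "(\<integral>\<^sup>+x\<in>{a..<b}. ennreal (g x) \<partial>lborel) \<le> ennreal (L * exp (K / 2))"
    using exp_bound_global[OF _ W ab, of 1] by (simp add: g_def m_def L_def K_def)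
  have g2: "(g x)^2 = exp (2 * (\<phi> x - m))" for x
    unfolding g_def power2_eq_square exp_add[symmetric] by (simp add: algebra_simps)
  have F2: "(\<integral>\<^sup>+x\<in>{a..<b}. ennreal ((g x)^2) \<partial>lborel) \<le> ennreal (L * exp (2 * K))"
    using exp_bound_global[OF _ W ab, of 2] by (simp add: g2 m_def L_def K_def)
  have ig: "set_integrable lborel {a..<b} g" by (rule nn_to_integrable(1)[OF _ _ F1]) (use L in \<open>auto simp: g_def\<close>)
  have ig2: "set_integrable lborel {a..<b} (\<lambda>x. (g x)^2)" and g2b: "(LINT x:{a..<b}|lborel. (g x)^2) \<le> L * exp (2 * K)"
    by (rule nn_to_integrable[OF _ _ F2]; use L in simp)+
  have igL: "set_integrable lebesgue {a..b} g" using ig by (subst conv_integrable) auto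
  have igL2: "set_integrable lebesgue {a..b} (\<lambda>x. (g x)^2)" using ig2 by (subst conv_integrable) auto
  have iphi: "set_integrable lborel {a..<b} \<phi>" by (rule loc_integrable[OF _ W]) simp
  have lowg: "L \<le> (LINT x:{a..<b}|lborel. g x)"
  proof -
    have i1: "set_integrable lborel {a..<b} (\<lambda>x. 1 + (\<phi> x - m))"
      using iphi by (intro set_integral_add set_integral_diff) auto
    have "(LINT x:{a..<b}|lborel. 1 + (\<phi> x - m)) = L * 1 + ((LINT x:{a..<b}|lborel. \<phi> x) - L * m)"
      using iphi L by (simp add: set_integral_add set_integral_diff set_integral_const_Ico[of L a, unfolded bL[symmetric]])
    also have "(LINT x:{a..<b}|lborel. \<phi> x) = L * m" using L by (simp add: m_def avg_def bL)
    finally have "(LINT x:{a..<b}|lborel. 1 + (\<phi> x - m)) = L" by simp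
    moreover have "(LINT x:{a..<b}|lborel. 1 + (\<phi> x - m)) \<le> (LINT x:{a..<b}|lborel. g x)"
      by (intro set_integral_mono i1 ig) (simp add: g_def exp_ge_add_one_self)
    ultimately show ?thesis by simp
  qed
  have [measurable]: "w \<in> borel_measurable lebesgue" by (intro measurable_completion) simp
  have [measurable]: "g \<in> borel_measurable lebesgue" by (intro measurable_completion) simp
  have aew: "AE x in lebesgue. w x = exp m * g x"
    using we by eventually_elim (simp add: g_def mult_exp_exp)
  have wrel: "(LINT x:A|lebesgue. w x) = exp m * (LINT x:A|lebesgue. g x)" if A: "A \<in> sets lebesgue" for A
  proof -
    have "(LINT x:A|lebesgue. w x) = (LINT x:A|lebesgue. exp m * g x)"
      by (rule set_lebesgue_integral_cong_AE[OF A]) (use aew in \<open>auto elim: AE_mp\<close>)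
    then show ?thesis by simp
  qed
  have wint: "set_integrable lebesgue {a..b} w"
  proof -
    have "set_integrable lebesgue {a..b} (\<lambda>x. exp m * g x)" using igL by simp
    moreover have "set_integrable lebesgue {a..b} w = set_integrable lebesgue {a..b} (\<lambda>x. exp m * g x)"
      by (rule set_integrable_cong_AE) (use aew in \<open>auto elim: AE_mp\<close>)
    ultimately show ?thesis by simp
  qed
  have main: "(LINT x:E|lebesgue. w x) \<le> exp K * (measure lebesgue E / (b - a)) powr (1/2) * (LINT x:{a..b}|lebesgue. w x)"
    if E: "E \<in> sets lebesgue" "E \<subseteq> {a..b}" for E
  proof -
    have Efin: "emeasure lebesgue E < \<infinity>"
    proof -
      have "emeasure lebesgue E \<le> emeasure lebesgue {a..b}" using E by (intro emeasure_mono) auto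
      also have "\<dots> < \<infinity>" using ab by simp
      finally show ?thesis .
    qed
    have iE: "set_integrable lebesgue E g" by (rule set_integrable_subset[OF igL E(1) E(2)])
    have iE2: "set_integrable lebesgue E (\<lambda>x. (g x)^2)" by (rule set_integrable_subset[OF igL2 E(1) E(2)])
    have cs: "(LINT x:E|lebesgue. g x)^2 \<le> measure lebesgue E * (LINT x:E|lebesgue. (g x)^2)"
      by (rule cs_gen[OF iE iE2 E(1) Efin])
    have "(LINT x:E|lebesgue. (g x)^2) \<le> (LINT x:{a..b}|lebesgue. (g x)^2)"
      unfolding set_lebesgue_integral_def
      by (intro integral_mono) (use iE2 igL2 E in \<open>auto simp: set_integrable_def split: split_indicator\<close>)
    also have "\<dots> = (LINT x:{a..<b}|lborel. (g x)^2)" by (rule conv_int) measurable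
    also have "\<dots> \<le> L * exp (2 * K)" by (rule g2b)
    finally have "(LINT x:E|lebesgue. g x)^2 \<le> measure lebesgue E * (L * exp (2 * K))"
      using cs by (meson order_trans mult_left_mono measure_nonneg)
    then have "(LINT x:E|lebesgue. g x) \<le> sqrt (measure lebesgue E * (L * exp (2 * K)))"
      by (rule real_le_rsqrt)
    also have "sqrt (measure lebesgue E * (L * exp (2 * K))) = exp K * sqrt (measure lebesgue E * L)"
    proof -
      have "exp (2 * K) = (exp K)^2" unfolding power2_eq_square exp_add[symmetric] by simp
      then show ?thesis by (simp add: real_sqrt_mult ac_simps)
    qed
    also have "sqrt (measure lebesgue E * L) = sqrt (measure lebesgue E / L) * L"
    proof -
      have "sqrt (measure lebesgue E / L) * L = sqrt (measure lebesgue E / L) * sqrt (L * L)"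
        using L by simp
      also have "\<dots> = sqrt (measure lebesgue E / L * (L * L))"
        by (simp only: real_sqrt_mult)
      also have "measure lebesgue E / L * (L * L) = measure lebesgue E * L"
        using L by (simp add: field_simps)
      finally show ?thesis by simp
    qed
    finally have gE: "(LINT x:E|lebesgue. g x) \<le> exp K * (sqrt (measure lebesgue E / L) * L)" .
    have gI: "L \<le> (LINT x:{a..b}|lebesgue. g x)" using lowg by (subst conv_int) auto
    have "(LINT x:E|lebesgue. w x) = exp m * (LINT x:E|lebesgue. g x)" by (rule wrel[OF E(1)])
    also have "\<dots> \<le> exp m * (exp K * (sqrt (measure lebesgue E / L) * L))"
      using gE by (intro mult_left_mono) auto
    also have "\<dots> \<le> exp m * (exp K * (sqrt (measure lebesgue E / L) * (LINT x:{a..b}|lebesgue. g x)))"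
      using gI L by (intro mult_left_mono) auto
    also have "\<dots> = exp K * (measure lebesgue E / (b - a)) powr (1/2) * (exp m * (LINT x:{a..b}|lebesgue. g x))"
      using L by (simp add: powr_half_sqrt L_def)
    also have "exp m * (LINT x:{a..b}|lebesgue. g x) = (LINT x:{a..b}|lebesgue. w x)"
      by (rule wrel[symmetric]) simp
    finally show ?thesis unfolding K_def .
  qed
  show ?thesis using wint main by (auto simp: K_def)
qed

lemma main_Ainf:
  fixes \<phi> w :: "real \<Rightarrow> real"
  assumes [measurable]: "\<phi> \<in> borel_measurable borel" "w \<in> borel_measurable borel"
    and W: "Wtot \<phi> < \<infinity>" and we: "AE x in lebesgue. w x = exp (\<phi> x)"
  shows "A_infinity w"
  unfolding A_infinity_def
proof (intro conjI allI)
  show "AE x in lebesgue. 0 \<le> w x" using we by eventually_elim simp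
  fix a b :: real
  have "set_integrable lebesgue {a..max b (a+1)} w"
    using main_local[OF assms(1,2) W we, of a "max b (a+1)"] by auto
  then show "set_integrable lebesgue {a..b} w"
    by (rule set_integrable_subset) auto
next
  show "\<exists>C>0. \<exists>\<alpha>>0. \<forall>a b. a < b \<longrightarrow> (\<forall>E\<in>sets lebesgue. E \<subseteq> {a..b} \<longrightarrow>
           (LINT x:E|lebesgue. w x) \<le> C * (measure lebesgue E / (b - a)) powr \<alpha> * (LINT x:{a..b}|lebesgue. w x))"
    using main_local[OF assms(1,2) W we]
    by (intro exI[of _ "exp (enn2real (Wtot \<phi>))"] conjI exI[of _ "1/2"]) auto
qed

theorem lemma5p2:
  fixes h :: "real \<Rightarrow> real"
  assumes "strict_mono h"
    and "\<exists>g. homeomorphism UNIV UNIV h g"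
    and "locally_abs_cont h"
    and "AE x in lebesgue. deriv h x > 0"
    and "H12_sq (\<lambda>x. ln (deriv h x)) < \<infinity>"
  shows "strongly_quasisymmetric h"
proof -
  obtain g where hom: "homeomorphism UNIV UNIV h g" using assms(2) by blast
  have hc: "continuous_on UNIV h" using hom by (simp add: homeomorphism_def)
  have [measurable]: "deriv h \<in> borel_measurable borel" by (rule deriv_borel[OF hc])
  have [measurable]: "(\<lambda>x. ln (deriv h x)) \<in> borel_measurable borel" by measurable
  have "H12_sq (\<lambda>x. ln (deriv h x)) = ennreal (1 / (4 * pi^2)) * Wtot (\<lambda>x. ln (deriv h x))"
    unfolding H12_sq_def Wtot_def Gk_def by (simp add: nn_integral_completion)
  then have W: "Wtot (\<lambda>x. ln (deriv h x)) < \<infinity>"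
    using assms(5) by (auto simp: ennreal_mult_less_top)
  have we: "AE x in lebesgue. \<bar>deriv h x\<bar> = exp (ln (deriv h x))"
    using assms(4) by eventually_elim simp
  have "A_infinity (\<lambda>x. \<bar>deriv h x\<bar>)" by (rule main_Ainf[OF _ _ W we]) measurable
  then show ?thesis unfolding strongly_quasisymmetric_def using assms(1,2,3) by blast
qed

end
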